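(* There is a function $f(n)\in\mathcal O(n^5)$ such that in every hedonic diversity game with $n$ agents in which all agents have strict and naturally single-peaked preferences, every sequence of IS deviations satisfying solitary homogeneity that starts from the singleton partition has length at most $f(n)$ (so the dynamics converges).
   Context: A hedonic diversity game (HDG) has agent set $N=R\cup B$ partitioned into red agents $R$ and blue agents $B$, $|N|=n$. Each agent $i$ has a weak order $\succsim_i^F$ over fractions $\{p/q: p\in\{0,\dots,|R|\},q\in[n]\}$, and evaluates a coalition $C\ni i$ by $|R\cap C|/|C|$. Strict: the orders are linear. Naturally single-peaked: for each agent $i$ and fractions $x,y,z$ with $x>y>z$ or $z>y>x$, $x\succ_i^F y$ implies $y\succsim_i^F z$. The singleton partition is $\{\{i\}:i\in N\}$. An IS deviation of agent $i$ from partition $\pi$ to $\pi'$ is a move of $i$ alone from $\pi(i)$ into another coalition of $\pi$ or into a new singleton such that $\pi'(i)\succ_i\pi(i)$ and $\pi'(j)\succsim_j\pi(j)$ for all $j\in\pi'(i)\setminus\{i\}$. A coalition is homogeneous if it is contained in $R$ or in $B$; a deviation of $i$ satisfies solitary homogeneity if, whenever $\pi'(i)$ is homogeneous, $\pi'(i)=\{i\}$. *)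

theory Defs
  imports Complex_Main "HOL-Library.Landau_Symbols"
begin

text \<open>Agents are natural numbers; N is the (finite) agent set, R \<subseteq> N the red agents,
  N - R the blue agents. A preference profile is pref :: nat \<Rightarrow> rat \<Rightarrow> rat \<Rightarrow> bool,
  where pref i x y means x \<succeq>_i y on fractions.\<close>

definition fractions :: "nat set \<Rightarrow> nat set \<Rightarrow> rat set" where
  "fractions N R = {of_nat p / of_nat q | p q. p \<le> card R \<and> 1 \<le> q \<and> q \<le> card N}"

definition weak_order_on :: "rat set \<Rightarrow> (rat \<Rightarrow> rat \<Rightarrow> bool) \<Rightarrow> bool" where
  "weak_order_on F P \<longleftrightarrow>
     (\<forall>x\<in>F. P x x) \<and>
     (\<forall>x\<in>F. \<forall>y\<in>F. \<forall>z\<in>F. P x y \<longrightarrow> P y z \<longrightarrow> P x z) \<and>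
     (\<forall>x\<in>F. \<forall>y\<in>F. P x y \<or> P y x)"

definition strict_pref :: "(rat \<Rightarrow> rat \<Rightarrow> bool) \<Rightarrow> rat \<Rightarrow> rat \<Rightarrow> bool" where
  "strict_pref P x y \<longleftrightarrow> P x y \<and> \<not> P y x"

text \<open>Strict: the weak order is linear (antisymmetric).\<close>
definition linear_order_on' :: "rat set \<Rightarrow> (rat \<Rightarrow> rat \<Rightarrow> bool) \<Rightarrow> bool" where
  "linear_order_on' F P \<longleftrightarrow> weak_order_on F P \<and>
     (\<forall>x\<in>F. \<forall>y\<in>F. P x y \<longrightarrow> P y x \<longrightarrow> x = y)"

definition naturally_single_peaked :: "rat set \<Rightarrow> (rat \<Rightarrow> rat \<Rightarrow> bool) \<Rightarrow> bool" where
  "naturally_single_peaked F P \<longleftrightarrow>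
     (\<forall>x\<in>F. \<forall>y\<in>F. \<forall>z\<in>F. (x > y \<and> y > z \<or> z > y \<and> y > x) \<longrightarrow>
        strict_pref P x y \<longrightarrow> P y z)"

definition strict_nsp_hdg :: "nat set \<Rightarrow> nat set \<Rightarrow> (nat \<Rightarrow> rat \<Rightarrow> rat \<Rightarrow> bool) \<Rightarrow> bool" where
  "strict_nsp_hdg N R pref \<longleftrightarrow> finite N \<and> R \<subseteq> N \<and>
     (\<forall>i\<in>N. linear_order_on' (fractions N R) (pref i) \<and>
             naturally_single_peaked (fractions N R) (pref i))"

definition ratio :: "nat set \<Rightarrow> nat set \<Rightarrow> rat" where
  "ratio R C = of_nat (card (R \<inter> C)) / of_nat (card C)"

definition is_partition :: "nat set \<Rightarrow> nat set set \<Rightarrow> bool" where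
  "is_partition N \<pi> \<longleftrightarrow> {} \<notin> \<pi> \<and> \<Union>\<pi> = N \<and>
     (\<forall>C\<in>\<pi>. \<forall>D\<in>\<pi>. C \<noteq> D \<longrightarrow> C \<inter> D = {})"

definition singleton_partition :: "nat set \<Rightarrow> nat set set" where
  "singleton_partition N = {{i} | i. i \<in> N}"

definition coal :: "nat set set \<Rightarrow> nat \<Rightarrow> nat set" where
  "coal \<pi> i = (THE C. C \<in> \<pi> \<and> i \<in> C)"

definition homogeneous :: "nat set \<Rightarrow> nat set \<Rightarrow> nat set \<Rightarrow> bool" where
  "homogeneous N R C \<longleftrightarrow> C \<subseteq> R \<or> C \<subseteq> N - R"

text \<open>Agent i leaves its coalition and joins T (T \<in> \<pi>, or T = {} meaning a new singleton).\<close>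
definition move :: "nat set set \<Rightarrow> nat \<Rightarrow> nat set \<Rightarrow> nat set set" where
  "move \<pi> i T = (\<pi> - {coal \<pi> i, T}) \<union> (if coal \<pi> i - {i} = {} then {} else {coal \<pi> i - {i}})
                 \<union> {insert i T}"

definition IS_SH_step :: "nat set \<Rightarrow> nat set \<Rightarrow> (nat \<Rightarrow> rat \<Rightarrow> rat \<Rightarrow> bool)
    \<Rightarrow> nat set set \<Rightarrow> nat set set \<Rightarrow> bool" where
  "IS_SH_step N R pref \<pi> \<pi>' \<longleftrightarrow>
     (\<exists>i\<in>N. \<exists>T\<in>\<pi> \<union> {{}}. i \<notin> T \<and> \<pi>' = move \<pi> i T \<and>
        strict_pref (pref i) (ratio R (insert i T)) (ratio R (coal \<pi> i)) \<and>
        (\<forall>j\<in>T. pref j (ratio R (insert i T)) (ratio R T)) \<and>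
        (homogeneous N R (insert i T) \<longrightarrow> insert i T = {i}))"

end

theory Submission
  imports Defs
begin


definition fr :: "nat \<Rightarrow> nat \<Rightarrow> rat" where
  "fr a b = of_nat a / of_nat (a + b)"

lemma fr_less_iff:
  assumes "1 \<le> a + b" "1 \<le> a' + b'"
  shows "fr a b < fr a' b' \<longleftrightarrow> a * b' < a' * b"
proof -
  have p1: "(0::rat) < of_nat (a+b)" using assms by simp
  have p2: "(0::rat) < of_nat (a'+b')" using assms by simp
  have "fr a b < fr a' b' \<longleftrightarrow> of_nat a * of_nat (a'+b') < of_nat a' * (of_nat (a+b) :: rat)"
    unfolding fr_def using p1 p2 by (simp add: divide_less_eq less_divide_eq mult.commute)
  also have "\<dots> \<longleftrightarrow> a * (a'+b') < a' * (a+b)"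
    by (metis of_nat_less_iff of_nat_mult)
  also have "\<dots> \<longleftrightarrow> a * b' < a' * b" by (simp add: algebra_simps)
  finally show ?thesis .
qed

lemma fr_eq_iff:
  assumes "1 \<le> a + b" "1 \<le> a' + b'"
  shows "fr a b = fr a' b' \<longleftrightarrow> a * b' = a' * b"
proof -
  have p1: "(0::rat) < of_nat (a+b)" using assms by simp
  have p2: "(0::rat) < of_nat (a'+b')" using assms by simp
  have "fr a b = fr a' b' \<longleftrightarrow> of_nat a * of_nat (a'+b') = of_nat a' * (of_nat (a+b) :: rat)"
    unfolding fr_def using p1 p2 by (simp add: field_simps)
  also have "\<dots> \<longleftrightarrow> a * (a'+b') = a' * (a+b)"
    by (metis of_nat_eq_iff of_nat_mult)
  also have "\<dots> \<longleftrightarrow> a * b' = a' * b" by (simp add: algebra_simps)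
  finally show ?thesis .
qed

lemma fr_le_iff:
  assumes "1 \<le> a + b" "1 \<le> a' + b'"
  shows "fr a b \<le> fr a' b' \<longleftrightarrow> a * b' \<le> a' * b"
  using fr_less_iff[OF assms] fr_eq_iff[OF assms] by (auto simp: order_le_less)

section \<open>Abstract single-peaked linear orders\<close>

locale agent =
  fixes Q :: "rat \<Rightarrow> rat \<Rightarrow> bool" and D :: "rat set" and owt ott :: nat
  assumes lin: "linear_order_on' D Q"
    and sp: "naturally_single_peaked D Q"
    and D_def: "D = {fr a b | a b. a \<le> ott \<and> b \<le> owt \<and> 1 \<le> a + b}"
begin

abbreviation S where "S \<equiv> strict_pref Q"

lemma inD: "a \<le> ott \<Longrightarrow> b \<le> owt \<Longrightarrow> 1 \<le> a + b \<Longrightarrow> fr a b \<in> D"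
  using D_def by blast

lemma refl: "x \<in> D \<Longrightarrow> Q x x"
  using lin unfolding linear_order_on'_def weak_order_on_def by blast
lemma trans: "x \<in> D \<Longrightarrow> y \<in> D \<Longrightarrow> z \<in> D \<Longrightarrow> Q x y \<Longrightarrow> Q y z \<Longrightarrow> Q x z"
  using lin unfolding linear_order_on'_def weak_order_on_def by blast
lemma total: "x \<in> D \<Longrightarrow> y \<in> D \<Longrightarrow> Q x y \<or> Q y x"
  using lin unfolding linear_order_on'_def weak_order_on_def by blast
lemma antisym: "x \<in> D \<Longrightarrow> y \<in> D \<Longrightarrow> Q x y \<Longrightarrow> Q y x \<Longrightarrow> x = y"
  using lin unfolding linear_order_on'_def by blast

lemma S_irrefl: "\<not> S x x" unfolding strict_pref_def by blast
lemma S_trans: "x \<in> D \<Longrightarrow> y \<in> D \<Longrightarrow> z \<in> D \<Longrightarrow> S x y \<Longrightarrow> S y z \<Longrightarrow> S x z"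
  unfolding strict_pref_def using trans by blast
lemma S_total: "x \<in> D \<Longrightarrow> y \<in> D \<Longrightarrow> x \<noteq> y \<Longrightarrow> S x y \<or> S y x"
  unfolding strict_pref_def using total antisym by blast
lemma S_of_Q: "x \<in> D \<Longrightarrow> y \<in> D \<Longrightarrow> x \<noteq> y \<Longrightarrow> Q x y \<Longrightarrow> S x y"
  unfolding strict_pref_def using antisym by blast
lemma S_asym: "S x y \<Longrightarrow> \<not> S y x" unfolding strict_pref_def by blast
lemma S_Q_contra: "S x y \<Longrightarrow> Q y x \<Longrightarrow> False" unfolding strict_pref_def by blast

lemma sp1: "x \<in> D \<Longrightarrow> y \<in> D \<Longrightarrow> z \<in> D \<Longrightarrow> (x > y \<and> y > z \<or> z > y \<and> y > x) \<Longrightarrow> S x y \<Longrightarrow> Q y z"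
  using sp unfolding naturally_single_peaked_def by blast

lemma DM:
  assumes D: "x \<in> D" "w \<in> D" "z \<in> D" "z' \<in> D"
    and "S x w" "x < w" "w \<le> z" "z < z'"
  shows "S z z'"
proof (cases "z = w")
  case True
  then have "Q w z'" using sp1[of x w z'] assms by auto
  then show ?thesis using True S_of_Q assms by auto
next
  case False
  then have "w < z" using assms by auto
  then have "Q w z" using sp1[of x w z] assms by auto
  then have "S w z" using S_of_Q assms \<open>w < z\<close> by auto
  then have "Q z z'" using sp1[of w z z'] assms \<open>w < z\<close> by auto
  then show ?thesis using S_of_Q assms by auto
qed

lemma UM:
  assumes D: "x \<in> D" "w \<in> D" "z \<in> D" "z' \<in> D"
    and "S x w" "x > w" "z \<le> w" "z' < z"
  shows "S z z'"
proof (cases "z = w")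
  case True
  then have "Q w z'" using sp1[of x w z'] assms by auto
  then show ?thesis using True S_of_Q assms by auto
next
  case False
  then have "z < w" using assms by auto
  then have "Q w z" using sp1[of x w z] assms by auto
  then have "S w z" using S_of_Q assms \<open>z < w\<close> by auto
  then have "Q z z'" using sp1[of w z z'] assms \<open>z < w\<close> by auto
  then show ?thesis using S_of_Q assms by auto
qed

end

definition appr :: "(rat \<Rightarrow> rat \<Rightarrow> bool) \<Rightarrow> nat \<Rightarrow> bool" where
  "appr Q y \<longleftrightarrow> y \<le> 1 \<or> strict_pref Q (fr 1 y) (fr 1 (y - 1))"

definition Aset :: "(rat \<Rightarrow> rat \<Rightarrow> bool) \<Rightarrow> nat \<Rightarrow> rat \<Rightarrow> nat set" where
  "Aset Q m x = {y \<in> {1..m}. appr Q y \<and> strict_pref Q x (fr 1 y)}"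

definition Aval :: "(rat \<Rightarrow> rat \<Rightarrow> bool) \<Rightarrow> nat \<Rightarrow> rat \<Rightarrow> nat" where
  "Aval Q m x = Max (insert 0 (Aset Q m x))"

definition rk :: "rat set \<Rightarrow> (rat \<Rightarrow> rat \<Rightarrow> bool) \<Rightarrow> rat \<Rightarrow> nat" where
  "rk D Q x = card {y \<in> D. strict_pref Q x y}"

context agent
begin

lemma finD: "finite D"
proof -
  have "D \<subseteq> (\<lambda>(a,b). fr a b) ` ({0..ott} \<times> {0..owt})"
    using D_def by auto
  then show ?thesis by (rule finite_subset) auto
qed

lemma cardD: "card D \<le> (ott+1) * (owt+1)"
proof -
  have "D \<subseteq> (\<lambda>(a,b). fr a b) ` ({0..ott} \<times> {0..owt})"
    using D_def by auto
  then have "card D \<le> card ((\<lambda>(a,b). fr a b) ` ({0..ott} \<times> {0..owt}))"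
    by (intro card_mono) auto
  also have "\<dots> \<le> card ({0..ott} \<times> {0..owt})" by (rule card_image_le) auto
  also have "\<dots> = (ott+1) * (owt+1)" by (simp add: card_cartesian_product)
  finally show ?thesis .
qed

lemma u_in: "1 \<le> ott \<Longrightarrow> y \<le> owt \<Longrightarrow> fr 1 y \<in> D"
  by (rule inD) auto

lemma u_less: "fr 1 y < fr 1 y' \<longleftrightarrow> y' < y"
  using fr_less_iff[of 1 y 1 y'] by simp

lemma u_le: "fr 1 y \<le> fr 1 y' \<longleftrightarrow> y' \<le> y"
  using fr_le_iff[of 1 y 1 y'] by simp

lemma u_in2: "Suc 0 \<le> ott \<Longrightarrow> y \<le> owt \<Longrightarrow> fr (Suc 0) y \<in> D"
  using u_in by simp

lemma c_in: "1 \<le> owt \<Longrightarrow> k \<le> ott \<Longrightarrow> fr k 1 \<in> D"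
  by (rule inD) auto

lemma c_less: "fr k 1 < fr k' 1 \<longleftrightarrow> k < k'"
  using fr_less_iff[of k 1 k' 1] by simp

lemma c_le: "fr k 1 \<le> fr k' 1 \<longleftrightarrow> k \<le> k'"
  using fr_le_iff[of k 1 k' 1] by simp

lemma L2:
  assumes o: "1 \<le> ott" and "appr Q y" "1 \<le> y'" "y' < y" "y \<le> owt"
  shows "S (fr 1 y) (fr 1 y')"
proof -
  have y2: "y \<ge> 2" using assms by auto
  have s: "S (fr 1 y) (fr 1 (y - 1))" using assms(2) y2 unfolding appr_def by auto
  have m1: "fr 1 y \<in> D" by (rule u_in) (use o assms in auto)
  have m2: "fr 1 (y-1) \<in> D" by (rule u_in) (use o assms in auto)
  have m3: "fr 1 y' \<in> D" by (rule u_in) (use o assms in auto)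
  show ?thesis
  proof (cases "y' = y - 1")
    case True then show ?thesis using s by simp
  next
    case False
    then have lt: "y' < y - 1" using assms by auto
    have c1: "fr 1 y < fr 1 (y-1)" by (subst u_less) (use y2 in auto)
    have c2: "fr 1 (y-1) < fr 1 y'" by (subst u_less) (use lt in auto)
    have "S (fr 1 (y-1)) (fr 1 y')"
      using DM[OF m1 m2 m2 m3 s c1 order.refl c2] .
    then show ?thesis using S_trans[OF m1 m2 m3 s] by blast
  qed
qed

lemma L1:
  assumes o: "1 \<le> ott" and "appr Q y" "2 \<le> y'" "y' \<le> y" "y \<le> owt"
  shows "appr Q y'"
proof (cases "y' = y")
  case True then show ?thesis using assms by simp
next
  case False
  then have lt: "y' < y" using assms by auto
  have y2: "y \<ge> 2" using assms by auto
  have s: "S (fr 1 y) (fr 1 (y - 1))" using assms(2) y2 unfolding appr_def by auto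
  have m1: "fr 1 y \<in> D" by (rule u_in) (use o assms in auto)
  have m2: "fr 1 (y-1) \<in> D" by (rule u_in) (use o assms in auto)
  have m3: "fr 1 y' \<in> D" by (rule u_in) (use o assms in auto)
  have m4: "fr 1 (y'-1) \<in> D" by (rule u_in) (use o assms in auto)
  have c1: "fr 1 y < fr 1 (y-1)" by (subst u_less) (use y2 in auto)
  have c2: "fr 1 (y-1) \<le> fr 1 y'" by (subst u_le) (use lt in auto)
  have c3: "fr 1 y' < fr 1 (y'-1)" by (subst u_less) (use assms in auto)
  have "S (fr 1 y') (fr 1 (y'-1))" using DM[OF m1 m2 m3 m4 s c1 c2 c3] .
  then show ?thesis unfolding appr_def by simp
qed

lemma tok_pref:
  assumes o: "1 \<le> ott" and "2 \<le> k" "k \<le> owt" "\<not> appr Q k"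
  shows "S (fr 1 (k-1)) (fr 1 k)"
proof -
  have m1: "fr 1 k \<in> D" by (rule u_in) (use o assms in auto)
  have m2: "fr 1 (k-1) \<in> D" by (rule u_in) (use o assms in auto)
  have "fr 1 k < fr 1 (k-1)" by (subst u_less) (use assms in auto)
  then have "fr 1 (k-1) \<noteq> fr 1 k" by simp
  then show ?thesis using S_total[OF m2 m1] assms unfolding appr_def by auto
qed

lemma L3:
  assumes o: "1 \<le> ott" and "2 \<le> k" "k \<le> owt" "\<not> appr Q k" "z' \<in> D" "z' < fr 1 k"
  shows "S (fr 1 k) z'"
proof -
  have m1: "fr 1 k \<in> D" by (rule u_in) (use o assms in auto)
  have m2: "fr 1 (k-1) \<in> D" by (rule u_in) (use o assms in auto)
  have c1: "fr 1 k < fr 1 (k-1)" by (subst u_less) (use assms in auto)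
  show ?thesis using UM[OF m2 m1 m1 assms(5) tok_pref[OF assms(1-4)] c1 order.refl assms(6)] .
qed

lemma center_dom:
  assumes o: "1 \<le> owt" and "2 \<le> k" "k \<le> ott" "S (fr k 1) (fr (k-1) 1)" "z' \<in> D" "z' \<le> fr (k-1) 1"
  shows "S (fr k 1) z'"
proof (cases "z' = fr (k-1) 1")
  case True then show ?thesis using assms by simp
next
  case False
  then have lt: "z' < fr (k-1) 1" using assms by auto
  have m1: "fr k 1 \<in> D" by (rule c_in) (use o assms in auto)
  have m2: "fr (k-1) 1 \<in> D" by (rule c_in) (use o assms in auto)
  have c1: "fr (k-1) 1 < fr k 1" by (subst c_less) (use assms in auto)
  have "S (fr (k-1) 1) z'" using UM[OF m1 m2 m2 assms(5) assms(4) c1 order.refl lt] .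
  then show ?thesis using S_trans[OF m1 m2 assms(5) assms(4)] by blast
qed

lemma center_shrink:
  assumes o: "1 \<le> owt" and "3 \<le> k" "k \<le> ott" "S (fr k 1) (fr (k-1) 1)"
  shows "S (fr (k-1) 1) (fr (k-2) 1)"
proof -
  have m1: "fr k 1 \<in> D" by (rule c_in) (use o assms in auto)
  have m2: "fr (k-1) 1 \<in> D" by (rule c_in) (use o assms in auto)
  have m3: "fr (k-2) 1 \<in> D" by (rule c_in) (use o assms in auto)
  have c1: "fr (k-1) 1 < fr k 1" by (subst c_less) (use assms in auto)
  have c2: "fr (k-2) 1 < fr (k-1) 1" by (subst c_less) (use assms in auto)
  show ?thesis using UM[OF m1 m2 m2 m3 assms(4) c1 order.refl c2] .
qed

lemma Aset_fin: "finite (Aset Q owt x)" unfolding Aset_def by auto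

lemma A_le: "Aval Q owt x \<le> owt"
  unfolding Aval_def using Aset_fin by (auto simp: Aset_def intro!: Max.boundedI)

lemma A_mono:
  assumes o: "1 \<le> ott" and "x \<in> D" "x' \<in> D" "S x' x"
  shows "Aval Q owt x \<le> Aval Q owt x'"
proof -
  have "Aset Q owt x \<subseteq> Aset Q owt x'"
  proof
    fix y assume "y \<in> Aset Q owt x"
    then have y: "y \<in> {1..owt}" "appr Q y" "S x (fr 1 y)" unfolding Aset_def by auto
    have "fr 1 y \<in> D" by (rule u_in) (use o y in auto)
    then have "S x' (fr 1 y)" using S_trans[of x' x "fr 1 y"] assms y by blast
    then show "y \<in> Aset Q owt x'" using y unfolding Aset_def by auto
  qed
  then show ?thesis unfolding Aval_def using Aset_fin
    by (intro Max_mono) auto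
qed

lemma A_ge:
  assumes "appr Q s" "1 \<le> s" "s \<le> owt" "S x (fr 1 s)"
  shows "s \<le> Aval Q owt x"
proof -
  have "s \<in> Aset Q owt x" unfolding Aset_def using assms by auto
  then show ?thesis unfolding Aval_def using Aset_fin by (intro Max_ge) auto
qed

lemma A_lt:
  assumes o: "1 \<le> ott" and "x \<in> D" "1 \<le> y0" "y0 \<le> owt" "S (fr 1 y0) x"
  shows "Aval Q owt x < y0"
proof -
  have "\<forall>y\<in>Aset Q owt x. y < y0"
  proof
    fix y assume y: "y \<in> Aset Q owt x"
    then have a: "appr Q y" "S x (fr 1 y)" "y \<le> owt" "1 \<le> y" unfolding Aset_def by auto
    show "y < y0"
    proof (rule ccontr)
      assume "\<not> y < y0"
      then consider "y = y0" | "y0 < y" by linarith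
      then show False
      proof cases
        case 1 then show False using a assms S_asym by blast
      next
        case 2
        then have "S (fr 1 y) (fr 1 y0)" using L2[of y y0] o a assms by blast
        moreover have "fr 1 y \<in> D" "fr 1 y0 \<in> D" using a assms o by (auto intro!: u_in2)
        ultimately have "S (fr 1 y) x" using S_trans[of "fr 1 y" "fr 1 y0" x] assms by blast
        then show False using a S_asym by blast
      qed
    qed
  qed
  then show ?thesis unfolding Aval_def using Aset_fin assms by (subst Max_less_iff) auto
qed

lemma A_tok:
  assumes o: "1 \<le> ott" and "2 \<le> k" "\<not> appr Q k"
  shows "Aval Q owt x < k"
proof -
  have "\<forall>y\<in>Aset Q owt x. y < k"
  proof
    fix y assume y: "y \<in> Aset Q owt x"
    then have a: "appr Q y" "y \<le> owt" unfolding Aset_def by auto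
    show "y < k"
    proof (rule ccontr)
      assume "\<not> y < k"
      then have "appr Q k" using L1[of y k] o a assms by auto
      then show False using assms by simp
    qed
  qed
  then show ?thesis unfolding Aval_def using Aset_fin assms by (subst Max_less_iff) auto
qed

lemma rk_mono:
  assumes "x \<in> D" "x' \<in> D" "S x' x"
  shows "rk D Q x < rk D Q x'"
proof -
  have "{y \<in> D. S x y} \<subseteq> {y \<in> D. S x' y}"
  proof
    fix y assume "y \<in> {y \<in> D. S x y}"
    then show "y \<in> {y \<in> D. S x' y}" using S_trans[of x' x y] assms by blast
  qed
  moreover have "x \<in> {y \<in> D. S x' y}" "x \<notin> {y \<in> D. S x y}" using assms S_irrefl by auto
  ultimately have "{y \<in> D. S x y} \<subset> {y \<in> D. S x' y}" by blast
  then show ?thesis unfolding rk_def using finD by (intro psubset_card_mono) auto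
qed

lemma rk_le: "rk D Q x \<le> card D"
  unfolding rk_def using finD by (intro card_mono) auto

end


definition zc :: "(rat \<Rightarrow> rat \<Rightarrow> bool) \<Rightarrow> nat \<Rightarrow> nat \<Rightarrow> nat \<Rightarrow> int" where
  "zc Q m x y = (if x = 1 \<and> y = 0 then 4 * int (Aval Q m (fr 0 1))
     else if y = 1 \<and> 2 \<le> x \<and> \<not> appr Q x then 4 * int (Aval Q m (fr 1 x)) - 4 * int x + 2 else 0)"

definition zr :: "rat set \<Rightarrow> (rat \<Rightarrow> rat \<Rightarrow> bool) \<Rightarrow> nat \<Rightarrow> nat \<Rightarrow> int" where
  "zr D Q x y = (if (x = 1 \<and> y = 0) \<or> (y = 1 \<and> 2 \<le> x \<and> \<not> appr Q x) then int (rk D Q (fr y x)) else 0)"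

definition pp :: "nat \<Rightarrow> nat \<Rightarrow> int" where
  "pp x y = (if x = 1 \<and> y = 1 then 2 else if x = 1 \<and> y \<ge> 2 then 2 * int y ^ 2
     else if y = 1 \<and> x \<ge> 2 then 2 * int x ^ 2 else 0)"

lemma pp_sym: "pp x y = pp y x" unfolding pp_def by auto
lemma pp_x1: "x \<ge> 1 \<Longrightarrow> pp x 1 = 2 * int x ^ 2" unfolding pp_def by auto
lemma pp_1y: "y \<ge> 1 \<Longrightarrow> pp 1 y = 2 * int y ^ 2" unfolding pp_def by auto
lemma pp_0: "pp 0 0 = 0" "pp 1 0 = 0" "pp 0 1 = 0" "pp (Suc 0) 0 = 0" "pp 0 (Suc 0) = 0" unfolding pp_def by auto
lemma pp_x1': "x \<ge> 1 \<Longrightarrow> pp x (Suc 0) = 2 * int x ^ 2" unfolding pp_def by auto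
lemma pp_1y': "y \<ge> 1 \<Longrightarrow> pp (Suc 0) y = 2 * int y ^ 2" unfolding pp_def by auto

context agent
begin

lemma zr_nonneg: "0 \<le> zr D Q x y" unfolding zr_def by auto
lemma zr_le: "zr D Q x y \<le> int (card D)" unfolding zr_def using rk_le by auto

lemma mover:
  assumes o: "1 \<le> ott"
   and sC: "(a = 1 \<and> c = 0) \<or> (a = 1 \<and> c = 1) \<or> (a \<ge> 2 \<and> c = 1)"
   and sT: "(a' = 0 \<and> c' = 0) \<or> (a' = 0 \<and> c' = 1) \<or> (a' = 1 \<and> c' = 1) \<or> (a' \<ge> 2 \<and> c' = 1)"
   and ba: "a \<le> owt" "a' + 1 \<le> owt"
   and mv: "S (fr c' (a'+1)) (fr c a)"
   and M: "card D \<le> M"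
  defines "dz \<equiv> pp (a-1) c + pp (a'+1) c' - pp a c - pp a' c' + zc Q owt (a'+1) c' - zc Q owt a c"
   and "dr \<equiv> zr D Q (a'+1) c' - zr D Q a c - (if a' = 0 \<and> c' = 1 then int M else 0)"
  shows "(dz \<ge> 1 \<and> dr \<ge> - 2 * int M) \<or> (dz \<ge> 0 \<and> dr \<ge> 1)"
proof -
  have zrb: "\<And>x y. 0 \<le> zr D Q x y \<and> zr D Q x y \<le> int M"
  proof -
    fix x y
    have "zr D Q x y \<le> int (card D)" by (rule zr_le)
    moreover have "int (card D) \<le> int M" using M by simp
    ultimately show "0 \<le> zr D Q x y \<and> zr D Q x y \<le> int M" using zr_nonneg[of x y] by linarith
  qed
  have w1: "dr \<ge> - 2 * int M" unfolding dr_def using zrb[of "a'+1" c'] zrb[of a c] by auto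
  have z0in: "fr 0 1 \<in> D" by (rule inD) (use ba in auto)
  have curD: "fr c a \<in> D" by (rule inD) (use o sC ba in auto)
  have newD: "fr c' (a'+1) \<in> D" by (rule inD) (use o sT ba in auto)
  from sC consider (S1) "a = 1" "c = 0" | (P1) "a = 1" "c = 1" | (L1) "a \<ge> 2" "c = 1" by blast
  then show ?thesis
  proof cases
    case S1
    from sT consider (E) "a' = 0" "c' = 0" | (X) "a' = 0" "c' = 1" | (TP) "a' = 1" "c' = 1"
      | (TL) "a' \<ge> 2" "c' = 1" by blast
    then show ?thesis
    proof cases
      case E then show ?thesis using mv S1 S_irrefl by simp
    next
      case X
      have mvc: "S (fr 1 1) (fr 0 1)" using mv S1 X by simp
      have "Aval Q owt (fr 0 1) < 1" using A_lt[OF o z0in _ _ mvc] ba X by auto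
      then have "dz = 2" unfolding dz_def using S1 X by (simp add: numeral_2_eq_2 zc_def pp_x1 pp_1y pp_x1' pp_1y' pp_0 of_nat_diff)
      then show ?thesis using w1 by simp
    next
      case TP
      have mvc: "S (fr 1 2) (fr 0 1)" using mv S1 TP by (simp add: numeral_2_eq_2)
      show ?thesis
      proof (cases "appr Q 2")
        case True
        have "Aval Q owt (fr 0 1) < 2" using A_lt[OF o z0in _ _ mvc] ba TP by auto
        then have "dz \<ge> 2" unfolding dz_def using S1 TP True by (simp add: numeral_2_eq_2 zc_def pp_x1 pp_1y pp_x1' pp_1y' pp_0 of_nat_diff)
        then show ?thesis using w1 by simp
      next
        case False
        have newD': "fr 1 2 \<in> D" using newD TP by (simp add: numeral_2_eq_2)
        have am: "Aval Q owt (fr 0 1) \<le> Aval Q owt (fr 1 2)" using A_mono[OF o z0in newD' mvc] .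
        have rm: "rk D Q (fr 0 1) < rk D Q (fr 1 2)" using rk_mono[OF z0in newD' mvc] .
        have "dz \<ge> 0" unfolding dz_def using S1 TP False am by (simp add: numeral_2_eq_2 zc_def pp_x1 pp_1y pp_x1' pp_1y' pp_0 of_nat_diff)
        moreover have "dr \<ge> 1" unfolding dr_def using S1 TP False rm by (simp add: numeral_2_eq_2 zr_def)
        ultimately show ?thesis by simp
      qed
    next
      case TL
      have mvc: "S (fr 1 (a'+1)) (fr 0 1)" using mv S1 TL by simp
      have newD': "fr 1 (a'+1) \<in> D" using newD TL by simp
      show ?thesis
      proof (cases "appr Q (a'+1)")
        case True
        have "Aval Q owt (fr 0 1) < a' + 1" using A_lt[OF o z0in _ _ mvc] ba TL by auto
        then have "dz \<ge> 2" unfolding dz_def using S1 TL True by (simp add: numeral_2_eq_2 zc_def pp_x1 pp_1y pp_x1' pp_1y' pp_0 of_nat_diff power2_eq_square algebra_simps)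
        then show ?thesis using w1 by simp
      next
        case False
        have am: "Aval Q owt (fr 0 1) \<le> Aval Q owt (fr 1 (a'+1))" using A_mono[OF o z0in newD' mvc] .
        have rm: "rk D Q (fr 0 1) < rk D Q (fr 1 (a'+1))" using rk_mono[OF z0in newD' mvc] .
        have "dz \<ge> 0" unfolding dz_def using S1 TL False am by (simp add: numeral_2_eq_2 zc_def pp_x1 pp_1y pp_x1' pp_1y' pp_0 of_nat_diff power2_eq_square algebra_simps)
        moreover have "dr \<ge> 1" unfolding dr_def using S1 TL False rm by (simp add: numeral_2_eq_2 zr_def)
        ultimately show ?thesis by simp
      qed
    qed
  next
    case P1
    from sT consider (E) "a' = 0" "c' = 0" | (X) "a' = 0" "c' = 1" | (TP) "a' = 1" "c' = 1"
      | (TL) "a' \<ge> 2" "c' = 1" by blast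
    then show ?thesis
    proof cases
      case E
      have mvc: "S (fr 0 1) (fr 1 1)" using mv P1 E by simp
      have ap1: "appr Q 1" unfolding appr_def by simp
      have "1 \<le> Aval Q owt (fr 0 1)" using A_ge[OF ap1 _ _ mvc] ba P1 by auto
      then have "dz \<ge> 2" unfolding dz_def using P1 E by (simp add: numeral_2_eq_2 zc_def pp_x1 pp_1y pp_x1' pp_1y' pp_0 of_nat_diff)
      then show ?thesis using w1 by simp
    next
      case X then show ?thesis using mv P1 S_irrefl by simp
    next
      case TP
      have mvc: "S (fr 1 2) (fr 1 1)" using mv P1 TP by (simp add: numeral_2_eq_2)
      have "appr Q 2" unfolding appr_def using mvc by simp
      then have "dz \<ge> 2" unfolding dz_def using P1 TP by (simp add: numeral_2_eq_2 zc_def pp_x1 pp_1y pp_x1' pp_1y' pp_0 of_nat_diff)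
      then show ?thesis using w1 by simp
    next
      case TL
      have mvc: "S (fr 1 (a'+1)) (fr 1 1)" using mv P1 TL by simp
      show ?thesis
      proof (cases "appr Q (a'+1)")
        case True
        then have "dz \<ge> 2" unfolding dz_def using P1 TL by (simp add: numeral_2_eq_2 zc_def pp_x1 pp_1y pp_x1' pp_1y' pp_0 of_nat_diff power2_eq_square algebra_simps)
        then show ?thesis using w1 by simp
      next
        case False
        have ap1: "appr Q 1" unfolding appr_def by simp
        have "1 \<le> Aval Q owt (fr 1 (a'+1))" using A_ge[OF ap1 _ _ mvc] ba P1 by auto
        then have "dz \<ge> 2" unfolding dz_def using P1 TL False by (simp add: numeral_2_eq_2 zc_def pp_x1 pp_1y pp_x1' pp_1y' pp_0 of_nat_diff power2_eq_square algebra_simps)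
        then show ?thesis using w1 by simp
      qed
    qed
  next
    case L1
    have cD: "fr 1 a \<in> D" using curD L1 by simp
    from sT consider (E) "a' = 0" "c' = 0" | (X) "a' = 0" "c' = 1" | (TP) "a' = 1" "c' = 1"
      | (TL) "a' \<ge> 2" "c' = 1" by blast
    note cases4 = this
    show ?thesis
    proof (cases "appr Q a")
      case ap: True
      show ?thesis
      proof (cases rule: cases4)
        case E
        have mvc: "S (fr 0 1) (fr 1 a)" using mv L1 E by simp
        have "a \<le> Aval Q owt (fr 0 1)" using A_ge[OF ap _ _ mvc] ba L1 by auto
        then have "dz \<ge> 2" unfolding dz_def using L1 E ap by (simp add: numeral_2_eq_2 zc_def pp_x1 pp_1y pp_x1' pp_1y' pp_0 of_nat_diff power2_eq_square algebra_simps)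
        then show ?thesis using w1 by simp
      next
        case X
        have mvc: "S (fr 1 1) (fr 1 a)" using mv L1 X by simp
        have "S (fr 1 a) (fr 1 1)" using L2[OF o ap _ _ ba(1)] L1 by auto
        then show ?thesis using mvc S_asym by blast
      next
        case TP
        have mvc: "S (fr 1 2) (fr 1 a)" using mv L1 TP by (simp add: numeral_2_eq_2)
        show ?thesis
        proof (cases "a = 2")
          case True then show ?thesis using mvc S_irrefl by simp
        next
          case False
          have "S (fr 1 a) (fr 1 2)" using L2[OF o ap _ _ ba(1)] L1 False by auto
          then show ?thesis using mvc S_asym by blast
        qed
      next
        case TL
        have mvc: "S (fr 1 (a'+1)) (fr 1 a)" using mv L1 TL by simp
        have gt: "a < a' + 1"
        proof (rule ccontr)
          assume "\<not> a < a' + 1"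
          then consider "a = a' + 1" | "a' + 1 < a" by linarith
          then show False
          proof cases
            case 1 then show False using mvc S_irrefl by simp
          next
            case 2
            have "S (fr 1 a) (fr 1 (a'+1))" using L2[OF o ap _ 2 ba(1)] by auto
            then show False using mvc S_asym by blast
          qed
        qed
        show ?thesis
        proof (cases "appr Q (a'+1)")
          case True
          then have "dz \<ge> 2" unfolding dz_def using L1 TL ap gt by (simp add: numeral_2_eq_2 zc_def pp_x1 pp_1y pp_x1' pp_1y' pp_0 of_nat_diff power2_eq_square algebra_simps)
          then show ?thesis using w1 by simp
        next
          case False
          have "a \<le> Aval Q owt (fr 1 (a'+1))" using A_ge[OF ap _ _ mvc] ba L1 by auto
          then have "dz \<ge> 2" unfolding dz_def using L1 TL ap False by (simp add: numeral_2_eq_2 zc_def pp_x1 pp_1y pp_x1' pp_1y' pp_0 of_nat_diff power2_eq_square algebra_simps)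
          then show ?thesis using w1 by simp
        qed
      qed
    next
      case tk: False
      show ?thesis
      proof (cases rule: cases4)
        case E
        have mvc: "S (fr 0 1) (fr 1 a)" using mv L1 E by simp
        have lt0: "fr 0 1 < fr 1 a" using L1 by (simp add: fr_def)
        have "S (fr 1 a) (fr 0 1)" using L3[OF o _ ba(1) tk z0in lt0] L1 by auto
        then show ?thesis using mvc S_asym by blast
      next
        case X
        have mvc: "S (fr 1 1) (fr 1 a)" using mv L1 X by simp
        have "Aval Q owt (fr 1 a) < 1" using A_lt[OF o cD _ _ mvc] ba L1 by auto
        then have "dz \<ge> 2" unfolding dz_def using L1 X tk by (simp add: numeral_2_eq_2 zc_def pp_x1 pp_1y pp_x1' pp_1y' pp_0 of_nat_diff power2_eq_square algebra_simps)
        then show ?thesis using w1 by simp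
      next
        case TP
        have mvc: "S (fr 1 2) (fr 1 a)" using mv L1 TP by (simp add: numeral_2_eq_2)
        show ?thesis
        proof (cases "appr Q 2")
          case True
          have "Aval Q owt (fr 1 a) < 2" using A_lt[OF o cD _ _ mvc] ba TP by auto
          then have "dz \<ge> 2" unfolding dz_def using L1 TP tk True by (simp add: numeral_2_eq_2 zc_def pp_x1 pp_1y pp_x1' pp_1y' pp_0 of_nat_diff power2_eq_square algebra_simps)
          then show ?thesis using w1 by simp
        next
          case False
          have newD': "fr 1 2 \<in> D" using newD TP by (simp add: numeral_2_eq_2)
          have am: "Aval Q owt (fr 1 a) \<le> Aval Q owt (fr 1 2)" using A_mono[OF o cD newD' mvc] .
          have rm: "rk D Q (fr 1 a) < rk D Q (fr 1 2)" using rk_mono[OF cD newD' mvc] .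
          have "dz \<ge> 0" unfolding dz_def using L1 TP tk False am by (simp add: numeral_2_eq_2 zc_def pp_x1 pp_1y pp_x1' pp_1y' pp_0 of_nat_diff power2_eq_square algebra_simps)
          moreover have "dr \<ge> 1" unfolding dr_def using L1 TP tk False rm by (simp add: numeral_2_eq_2 zr_def)
          ultimately show ?thesis by simp
        qed
      next
        case TL
        have mvc: "S (fr 1 (a'+1)) (fr 1 a)" using mv L1 TL by simp
        have newD': "fr 1 (a'+1) \<in> D" using newD TL by simp
        show ?thesis
        proof (cases "appr Q (a'+1)")
          case True
          have "Aval Q owt (fr 1 a) < a' + 1" using A_lt[OF o cD _ _ mvc] ba TL by auto
          then have "dz \<ge> 2" unfolding dz_def using L1 TL tk True by (simp add: numeral_2_eq_2 zc_def pp_x1 pp_1y pp_x1' pp_1y' pp_0 of_nat_diff power2_eq_square algebra_simps)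
          then show ?thesis using w1 by simp
        next
          case False
          have am: "Aval Q owt (fr 1 a) \<le> Aval Q owt (fr 1 (a'+1))" using A_mono[OF o cD newD' mvc] .
          have rm: "rk D Q (fr 1 a) < rk D Q (fr 1 (a'+1))" using rk_mono[OF cD newD' mvc] .
          have "dz \<ge> 0" unfolding dz_def using L1 TL tk False am by (simp add: numeral_2_eq_2 zc_def pp_x1 pp_1y pp_x1' pp_1y' pp_0 of_nat_diff power2_eq_square algebra_simps)
          moreover have "dr \<ge> 1" unfolding dr_def using L1 TL tk False rm by (simp add: numeral_2_eq_2 zr_def)
          ultimately show ?thesis by simp
        qed
      qed
    qed
  qed
qed

end


context agent
begin

lemma left_leaf:
  assumes o: "1 \<le> ott" and a: "2 \<le> a" "a \<le> owt" and K: "int (card D) \<le> K"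
  shows "K * zc Q owt a 1 + zr D Q a 1 \<le> K * zc Q owt (a-1) 1 + zr D Q (a-1) 1"
proof (cases "appr Q a")
  case True
  have "zc Q owt (a-1) 1 = 0 \<and> zr D Q (a-1) 1 = 0"
  proof (cases "a - 1 = 1")
    case True then show ?thesis by (simp add: zc_def zr_def)
  next
    case False
    then have "appr Q (a-1)" using L1[OF o \<open>appr Q a\<close> _ _ a(2)] a by auto
    then show ?thesis by (simp add: zc_def zr_def)
  qed
  then show ?thesis using True by (simp add: zc_def zr_def)
next
  case tk: False
  have Alt: "Aval Q owt (fr 1 a) < a" using A_tok[OF o a(1) tk] .
  have rle: "int (rk D Q (fr 1 a)) \<le> K" using rk_le[of "fr 1 a"] K by linarith
  have K0: "0 \<le> K" using K by linarith
  have old: "K * zc Q owt a 1 + zr D Q a 1 = K * (4 * int (Aval Q owt (fr 1 a)) - 4 * int a + 2) + int (rk D Q (fr 1 a))"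
    using tk a by (simp add: zc_def zr_def)
  have oldle: "K * zc Q owt a 1 + zr D Q a 1 \<le> 0"
  proof -
    have "4 * int (Aval Q owt (fr 1 a)) - 4 * int a + 2 \<le> -2" using Alt by linarith
    then have "K * (4 * int (Aval Q owt (fr 1 a)) - 4 * int a + 2) \<le> K * (-2)"
      using K0 by (intro mult_left_mono) auto
    then show ?thesis using old rle K0 by linarith
  qed
  show ?thesis
  proof (cases "a - 1 = 1 \<or> appr Q (a-1)")
    case True
    then have "zc Q owt (a-1) 1 = 0 \<and> zr D Q (a-1) 1 = 0" by (auto simp: zc_def zr_def)
    then show ?thesis using oldle by simp
  next
    case False
    then have a1: "2 \<le> a - 1" "\<not> appr Q (a-1)" using a by auto
    have m1: "fr 1 a \<in> D" by (rule u_in) (use o a in auto)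
    have m2: "fr 1 (a-1) \<in> D" by (rule u_in) (use o a in auto)
    have tp: "S (fr 1 (a-1)) (fr 1 a)" using tok_pref[OF o a(1) a(2) tk] .
    have am: "Aval Q owt (fr 1 a) \<le> Aval Q owt (fr 1 (a-1))" using A_mono[OF o m1 m2 tp] .
    have rm: "rk D Q (fr 1 a) < rk D Q (fr 1 (a-1))" using rk_mono[OF m1 m2 tp] .
    have new: "K * zc Q owt (a-1) 1 + zr D Q (a-1) 1 = K * (4 * int (Aval Q owt (fr 1 (a-1))) - 4 * int (a-1) + 2) + int (rk D Q (fr 1 (a-1)))"
      using a1 by (simp add: zc_def zr_def)
    have "4 * int (Aval Q owt (fr 1 a)) - 4 * int a + 2 \<le> 4 * int (Aval Q owt (fr 1 (a-1))) - 4 * int (a-1) + 2"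
      using am a by (simp add: of_nat_diff)
    then have "K * (4 * int (Aval Q owt (fr 1 a)) - 4 * int a + 2) \<le> K * (4 * int (Aval Q owt (fr 1 (a-1))) - 4 * int (a-1) + 2)"
      using K0 by (intro mult_left_mono) auto
    then show ?thesis using old new rm by linarith
  qed
qed

lemma left_center:
  assumes "2 \<le> a"
  shows "K * zc Q owt 1 a + zr D Q 1 a \<le> K * zc Q owt 1 (a-1) + zr D Q 1 (a-1)"
  using assms by (simp add: zc_def zr_def)

lemma left_pair:
  assumes "0 \<le> K"
  shows "K * zc Q owt 1 1 + zr D Q 1 1 \<le> K * zc Q owt 1 0 + zr D Q 1 0"
proof -
  have "0 \<le> K * zc Q owt 1 0" using assms by (simp add: zc_def)
  then show ?thesis by (simp add: zc_def zr_def)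
qed

lemma tgt_single:
  assumes o: "1 \<le> ott" "1 \<le> owt" and c: "Q (fr 1 1) (fr 0 1)"
  shows "K * zc Q owt 1 0 + zr D Q 1 0 - int (card D) \<le> K * zc Q owt 1 1 + zr D Q 1 1"
proof -
  have m1: "fr 1 1 \<in> D" by (rule u_in) (use o in auto)
  have m0: "fr 0 1 \<in> D" by (rule inD) (use o in auto)
  have ne: "fr 1 1 \<noteq> fr 0 1" by (simp add: fr_def)
  have s: "S (fr 1 1) (fr 0 1)" using S_of_Q[OF m1 m0 ne c] .
  have "Aval Q owt (fr 0 1) < 1" using A_lt[OF o(1) m0 _ _ s] o by auto
  then have "zc Q owt 1 0 = 0" by (simp add: zc_def)
  moreover have "zr D Q 1 0 \<le> int (card D)" by (rule zr_le)
  ultimately show ?thesis by (simp add: zc_def zr_def)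
qed

lemma tgt_leaf:
  assumes o: "1 \<le> ott" and b: "1 \<le> b" "b + 1 \<le> owt" and c: "Q (fr 1 (b+1)) (fr 1 b)"
  shows "K * zc Q owt b 1 + zr D Q b 1 \<le> K * zc Q owt (b+1) 1 + zr D Q (b+1) 1"
proof -
  have m1: "fr 1 (b+1) \<in> D" by (rule u_in) (use o b in auto)
  have m0: "fr 1 b \<in> D" by (rule u_in) (use o b in auto)
  have ne: "fr 1 (b+1) \<noteq> fr 1 b" using u_less[of "b+1" b] by auto
  have s: "S (fr 1 (b+1)) (fr 1 b)" using S_of_Q[OF m1 m0 ne c] .
  then have ap: "appr Q (b+1)" unfolding appr_def by simp
  have "b = 1 \<or> appr Q b"
  proof (cases "2 \<le> b")
    case True then have "appr Q b" using L1[OF o ap True _ b(2)] by auto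
    then show ?thesis by simp
  next
    case False then show ?thesis using b by auto
  qed
  then show ?thesis using ap by (auto simp: zc_def zr_def)
qed

lemma tgt_center:
  assumes "1 \<le> b"
  shows "K * zc Q owt 1 b + zr D Q 1 b \<le> K * zc Q owt 1 (b+1) + zr D Q 1 (b+1)"
  using assms by (simp add: zc_def zr_def)

end


section \<open>Game level\<close>

definition sc :: "nat set \<Rightarrow> nat \<Rightarrow> nat \<Rightarrow> bool" where
  "sc R j x \<longleftrightarrow> (x \<in> R \<longleftrightarrow> j \<in> R)"

definition ow :: "nat set \<Rightarrow> nat \<Rightarrow> nat set \<Rightarrow> nat" where
  "ow R j X = card {x \<in> X. sc R j x}"

definition ot :: "nat set \<Rightarrow> nat \<Rightarrow> nat set \<Rightarrow> nat" where
  "ot R j X = card {x \<in> X. \<not> sc R j x}"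

definition QQ :: "nat set \<Rightarrow> (nat \<Rightarrow> rat \<Rightarrow> rat \<Rightarrow> bool) \<Rightarrow> nat \<Rightarrow> rat \<Rightarrow> rat \<Rightarrow> bool" where
  "QQ R pref j v w = (if j \<in> R then pref j (1 - v) (1 - w) else pref j v w)"

definition DD :: "nat set \<Rightarrow> nat set \<Rightarrow> nat \<Rightarrow> rat set" where
  "DD N R j = {fr a b | a b. a \<le> ot R j N \<and> b \<le> ow R j N \<and> 1 \<le> a + b}"

definition vv :: "nat set \<Rightarrow> nat \<Rightarrow> nat set \<Rightarrow> rat" where
  "vv R j X = fr (ot R j X) (ow R j X)"

lemma one_minus_fr: "1 \<le> a + b \<Longrightarrow> 1 - fr a b = fr b a"
  unfolding fr_def by (simp add: field_simps)

lemma card_split: "finite X \<Longrightarrow> card {x \<in> X. P x} + card {x \<in> X. \<not> P x} = card X"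
proof -
  assume f: "finite X"
  have "X = {x \<in> X. P x} \<union> {x \<in> X. \<not> P x}" by auto
  then have "card X = card ({x \<in> X. P x} \<union> {x \<in> X. \<not> P x})" by simp
  also have "\<dots> = card {x \<in> X. P x} + card {x \<in> X. \<not> P x}"
    by (rule card_Un_disjoint) (use f in auto)
  finally show ?thesis by simp
qed

lemma ow_ot_card: "finite X \<Longrightarrow> ow R j X + ot R j X = card X"
  unfolding ow_def ot_def by (rule card_split)

lemma sc_refl[simp]: "sc R j j" unfolding sc_def by simp

lemma sc_same: "sc R j i \<Longrightarrow> sc R j x \<longleftrightarrow> sc R i x" unfolding sc_def by blast
lemma sc_diff: "\<not> sc R j i \<Longrightarrow> sc R j x \<longleftrightarrow> \<not> sc R i x" unfolding sc_def by blast
lemma sc_sym: "sc R j i \<longleftrightarrow> sc R i j" unfolding sc_def by blast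

lemma ow_same: "sc R j i \<Longrightarrow> ow R j X = ow R i X"
  unfolding ow_def using sc_same[of R j i] by simp
lemma ot_same: "sc R j i \<Longrightarrow> ot R j X = ot R i X"
  unfolding ot_def using sc_same[of R j i] by simp
lemma ow_diff: "\<not> sc R j i \<Longrightarrow> ow R j X = ot R i X"
  unfolding ow_def ot_def using sc_diff[of R j i] by simp
lemma ot_diff: "\<not> sc R j i \<Longrightarrow> ot R j X = ow R i X"
  unfolding ow_def ot_def using sc_diff[of R j i] by simp

lemma card_ins_filter: "finite X \<Longrightarrow> i \<notin> X \<Longrightarrow> card {x \<in> insert i X. P x} = card {x \<in> X. P x} + (if P i then 1 else 0)"
proof -
  assume f: "finite X" and i: "i \<notin> X"
  show ?thesis
  proof (cases "P i")
    case True
    then have "{x \<in> insert i X. P x} = insert i {x \<in> X. P x}" by auto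
    then show ?thesis using True f i by simp
  next
    case False
    then have "{x \<in> insert i X. P x} = {x \<in> X. P x}" by auto
    then show ?thesis using False by simp
  qed
qed

lemma ow_ins: "finite X \<Longrightarrow> i \<notin> X \<Longrightarrow> ow R j (insert i X) = ow R j X + (if sc R j i then 1 else 0)"
  unfolding ow_def by (rule card_ins_filter)

lemma ot_ins: "finite X \<Longrightarrow> i \<notin> X \<Longrightarrow> ot R j (insert i X) = ot R j X + (if sc R j i then 0 else 1)"
  unfolding ot_def using card_ins_filter[of X i "\<lambda>x. \<not> sc R j x"] by simp

lemma ow_del: "finite X \<Longrightarrow> i \<in> X \<Longrightarrow> ow R j (X - {i}) = ow R j X - (if sc R j i then 1 else 0)"
proof -
  assume f: "finite X" and i: "i \<in> X"
  have "ow R j X = ow R j (insert i (X - {i}))" using i by (simp add: insert_absorb)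
  also have "\<dots> = ow R j (X - {i}) + (if sc R j i then 1 else 0)" by (rule ow_ins) (use f in auto)
  finally show ?thesis by simp
qed

lemma ot_del: "finite X \<Longrightarrow> i \<in> X \<Longrightarrow> ot R j (X - {i}) = ot R j X - (if sc R j i then 0 else 1)"
proof -
  assume f: "finite X" and i: "i \<in> X"
  have "ot R j X = ot R j (insert i (X - {i}))" using i by (simp add: insert_absorb)
  also have "\<dots> = ot R j (X - {i}) + (if sc R j i then 0 else 1)" by (rule ot_ins) (use f in auto)
  finally show ?thesis by simp
qed

lemma ow_mono: "finite N \<Longrightarrow> X \<subseteq> N \<Longrightarrow> ow R j X \<le> ow R j N"
  unfolding ow_def by (rule card_mono) auto
lemma ot_mono: "finite N \<Longrightarrow> X \<subseteq> N \<Longrightarrow> ot R j X \<le> ot R j N"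
  unfolding ot_def by (rule card_mono) auto

lemma ow_pos: "finite X \<Longrightarrow> j \<in> X \<Longrightarrow> 1 \<le> ow R j X"
proof -
  assume "finite X" "j \<in> X"
  then have "{x \<in> X. sc R j x} \<noteq> {}" "finite {x \<in> X. sc R j x}" by auto
  then show ?thesis unfolding ow_def by (simp add: Suc_le_eq card_gt_0_iff)
qed

lemma ot_pos: "finite X \<Longrightarrow> x \<in> X \<Longrightarrow> \<not> sc R j x \<Longrightarrow> 1 \<le> ot R j X"
proof -
  assume "finite X" "x \<in> X" "\<not> sc R j x"
  then have "{x \<in> X. \<not> sc R j x} \<noteq> {}" "finite {x \<in> X. \<not> sc R j x}" by auto
  then show ?thesis unfolding ot_def by (simp add: Suc_le_eq card_gt_0_iff)
qed

lemma ratio_fr: "finite X \<Longrightarrow> ratio R X = fr (card {x \<in> X. x \<in> R}) (card {x \<in> X. x \<notin> R})"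
proof -
  assume f: "finite X"
  have "card {x \<in> X. x \<in> R} + card {x \<in> X. x \<notin> R} = card X" using card_split[OF f] .
  moreover have "R \<inter> X = {x \<in> X. x \<in> R}" by auto
  ultimately show ?thesis unfolding ratio_def fr_def by simp
qed

lemma vv_blue: "j \<notin> R \<Longrightarrow> vv R j X = fr (card {x \<in> X. x \<in> R}) (card {x \<in> X. x \<notin> R})"
  unfolding vv_def ot_def ow_def sc_def by simp

lemma vv_red: "j \<in> R \<Longrightarrow> vv R j X = fr (card {x \<in> X. x \<notin> R}) (card {x \<in> X. x \<in> R})"
  unfolding vv_def ot_def ow_def sc_def by simp

lemma QQ_ratio:
  assumes f: "finite X" "finite Y" "X \<noteq> {}" "Y \<noteq> {}"
  shows "pref j (ratio R X) (ratio R Y) \<longleftrightarrow> QQ R pref j (vv R j X) (vv R j Y)"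
proof (cases "j \<in> R")
  case False then show ?thesis using f by (simp add: QQ_def vv_blue ratio_fr)
next
  case True
  have e: "\<And>Z. finite Z \<Longrightarrow> Z \<noteq> {} \<Longrightarrow> 1 - vv R j Z = ratio R Z"
  proof -
    fix Z :: "nat set" assume z: "finite Z" "Z \<noteq> {}"
    have "card {x \<in> Z. x \<in> R} + card {x \<in> Z. x \<notin> R} = card Z" using card_split[OF z(1)] .
    moreover have "card Z \<ge> 1" using z by (simp add: Suc_le_eq card_gt_0_iff)
    ultimately show "1 - vv R j Z = ratio R Z"
      using True z one_minus_fr[of "card {x \<in> Z. x \<notin> R}" "card {x \<in> Z. x \<in> R}"]
      by (simp add: vv_red ratio_fr)
  qed
  show ?thesis using True e f by (simp add: QQ_def)
qed

lemma SQ_ratio: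
  assumes f: "finite X" "finite Y" "X \<noteq> {}" "Y \<noteq> {}"
  shows "strict_pref (pref j) (ratio R X) (ratio R Y) \<longleftrightarrow> strict_pref (QQ R pref j) (vv R j X) (vv R j Y)"
  unfolding strict_pref_def using QQ_ratio[OF f] QQ_ratio[OF f(2,1,4,3)] by blast

lemma agent_QQ:
  assumes G: "strict_nsp_hdg N R pref" and j: "j \<in> N"
  shows "agent (QQ R pref j) (DD N R j) (ow R j N) (ot R j N)"
proof -
  have fN: "finite N" and RN: "R \<subseteq> N" using G unfolding strict_nsp_hdg_def by auto
  have lo: "linear_order_on' (fractions N R) (pref j)" and spj: "naturally_single_peaked (fractions N R) (pref j)"
    using G j unfolding strict_nsp_hdg_def by auto
  have "{x \<in> N. x \<in> R} = R" using RN by blast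
  then have cR: "card {x \<in> N. x \<in> R} = card R" by simp
  have cs: "card {x \<in> N. x \<in> R} + card {x \<in> N. x \<notin> R} = card N" using card_split[OF fN] .
  have inF: "\<And>a b. a \<le> card R \<Longrightarrow> a + b \<le> card N \<Longrightarrow> 1 \<le> a + b \<Longrightarrow> fr a b \<in> fractions N R"
    unfolding fractions_def fr_def by blast
  show ?thesis
  proof (cases "j \<in> R")
    case False
    have ot: "ot R j N = card {x \<in> N. x \<in> R}" and ow: "ow R j N = card {x \<in> N. x \<notin> R}"
      using False unfolding ot_def ow_def sc_def by simp_all
    have sub: "DD N R j \<subseteq> fractions N R"
    proof
      fix v assume "v \<in> DD N R j"
      then obtain a b where v: "v = fr a b" "a \<le> ot R j N" "b \<le> ow R j N" "1 \<le> a + b"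
        unfolding DD_def by blast
      show "v \<in> fractions N R" using v ot ow cR cs by (intro inF[of a b, folded v(1)]) auto
    qed
    have Q: "QQ R pref j = pref j" using False by (intro ext) (simp add: QQ_def)
    show ?thesis
    proof
      show "linear_order_on' (DD N R j) (QQ R pref j)"
        using lo sub unfolding Q linear_order_on'_def weak_order_on_def by blast
      show "naturally_single_peaked (DD N R j) (QQ R pref j)"
        using spj sub unfolding Q naturally_single_peaked_def by blast
    qed (simp add: DD_def)
  next
    case True
    have ot: "ot R j N = card {x \<in> N. x \<notin> R}" and ow: "ow R j N = card {x \<in> N. x \<in> R}"
      using True unfolding ot_def ow_def sc_def by simp_all
    have map: "\<And>v. v \<in> DD N R j \<Longrightarrow> 1 - v \<in> fractions N R"
    proof -
      fix v assume "v \<in> DD N R j"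
      then obtain a b where v: "v = fr a b" "a \<le> ot R j N" "b \<le> ow R j N" "1 \<le> a + b"
        unfolding DD_def by blast
      have "1 - v = fr b a" using v one_minus_fr by simp
      moreover have "fr b a \<in> fractions N R" using v ot ow cR cs by (intro inF) auto
      ultimately show "1 - v \<in> fractions N R" by simp
    qed
    have Q: "QQ R pref j = (\<lambda>v w. pref j (1 - v) (1 - w))" using True by (intro ext) (simp add: QQ_def)
    show ?thesis
    proof
      show "linear_order_on' (DD N R j) (QQ R pref j)"
        unfolding Q linear_order_on'_def weak_order_on_def
      proof (intro conjI ballI impI)
        fix x assume "x \<in> DD N R j"
        then show "pref j (1 - x) (1 - x)" using lo map unfolding linear_order_on'_def weak_order_on_def by blast
      next
        fix x y z assume "x \<in> DD N R j" "y \<in> DD N R j" "z \<in> DD N R j" "pref j (1 - x) (1 - y)" "pref j (1 - y) (1 - z)"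
        then show "pref j (1 - x) (1 - z)" using lo map unfolding linear_order_on'_def weak_order_on_def by blast
      next
        fix x y assume "x \<in> DD N R j" "y \<in> DD N R j"
        then show "pref j (1 - x) (1 - y) \<or> pref j (1 - y) (1 - x)" using lo map unfolding linear_order_on'_def weak_order_on_def by blast
      next
        fix x y assume "x \<in> DD N R j" "y \<in> DD N R j" "pref j (1 - x) (1 - y)" "pref j (1 - y) (1 - x)"
        then have "1 - x = 1 - y" using lo map unfolding linear_order_on'_def by blast
        then show "x = y" by simp
      qed
      show "naturally_single_peaked (DD N R j) (QQ R pref j)"
        unfolding Q naturally_single_peaked_def strict_pref_def
      proof (intro ballI impI)
        fix x y z assume m: "x \<in> DD N R j" "y \<in> DD N R j" "z \<in> DD N R j"
          and o: "y < x \<and> z < y \<or> y < z \<and> x < y" and s: "pref j (1 - x) (1 - y) \<and> \<not> pref j (1 - y) (1 - x)"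
        have o': "1 - x < 1 - y \<and> 1 - y < 1 - z \<or> 1 - z < 1 - y \<and> 1 - y < 1 - x" using o by auto
        show "pref j (1 - y) (1 - z)"
          using spj map[OF m(1)] map[OF m(2)] map[OF m(3)] o' s
          unfolding naturally_single_peaked_def strict_pref_def by blast
      qed
    qed (simp add: DD_def)
  qed
qed




definition MM :: "nat set \<Rightarrow> nat" where "MM N = (card N + 1)^2"
definition KK :: "nat set \<Rightarrow> int" where "KK N = 2 * int (MM N) + 1"

definition zz :: "nat set \<Rightarrow> nat set \<Rightarrow> (nat \<Rightarrow> rat \<Rightarrow> rat \<Rightarrow> bool) \<Rightarrow> nat \<Rightarrow> nat set \<Rightarrow> int" where
  "zz N R pref j X = KK N * zc (QQ R pref j) (ow R j N) (ow R j X) (ot R j X)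
      + zr (DD N R j) (QQ R pref j) (ow R j X) (ot R j X)"

definition pblk :: "nat set \<Rightarrow> nat set \<Rightarrow> int" where
  "pblk R X = pp (card {x \<in> X. x \<in> R}) (card {x \<in> X. x \<notin> R})"

definition HH :: "nat set \<Rightarrow> nat set \<Rightarrow> (nat \<Rightarrow> rat \<Rightarrow> rat \<Rightarrow> bool) \<Rightarrow> nat set \<Rightarrow> int" where
  "HH N R pref X = KK N * pblk R X + (\<Sum>j\<in>X. zz N R pref j X)"

definition TH :: "nat set \<Rightarrow> nat set \<Rightarrow> (nat \<Rightarrow> rat \<Rightarrow> rat \<Rightarrow> bool) \<Rightarrow> nat set set \<Rightarrow> int" where
  "TH N R pref P = (\<Sum>X\<in>P. HH N R pref X)"

definition good :: "nat set \<Rightarrow> nat set \<Rightarrow> (nat \<Rightarrow> rat \<Rightarrow> rat \<Rightarrow> bool) \<Rightarrow> nat set \<Rightarrow> bool" where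
  "good N R pref X \<longleftrightarrow> X \<subseteq> N \<and> X \<noteq> {} \<and>
     (\<forall>j\<in>X. (ow R j X = 1 \<and> ot R j X = 0) \<or> ot R j X = 1 \<or> (ow R j X = 1 \<and> 1 \<le> ot R j X)) \<and>
     (\<forall>j\<in>X. ow R j X = 1 \<and> 2 \<le> ot R j X \<longrightarrow>
        strict_pref (QQ R pref j) (fr (ot R j X) 1) (fr (ot R j X - 1) 1))"

lemma HH_empty[simp]: "HH N R pref {} = 0"
  unfolding HH_def pblk_def by (simp add: pp_def)

lemma pblk_rel: "pblk R X = pp (ow R i X) (ot R i X)"
proof (cases "i \<in> R")
  case True then show ?thesis unfolding pblk_def ow_def ot_def sc_def by simp
next
  case False then show ?thesis unfolding pblk_def ow_def ot_def sc_def by (simp add: pp_sym)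
qed

lemma cardDD:
  assumes G: "strict_nsp_hdg N R pref" and j: "j \<in> N"
  shows "card (DD N R j) \<le> MM N"
proof -
  interpret agent "QQ R pref j" "DD N R j" "ow R j N" "ot R j N" using agent_QQ[OF G j] .
  have fN: "finite N" using G unfolding strict_nsp_hdg_def by auto
  have s: "ow R j N + ot R j N = card N" using ow_ot_card[OF fN] .
  have "card (DD N R j) \<le> (ot R j N + 1) * (ow R j N + 1)" using cardD .
  also have "\<dots> \<le> (card N + 1) * (card N + 1)" using s by (intro mult_mono) auto
  finally show ?thesis unfolding MM_def by (simp add: power2_eq_square)
qed

lemma good_fin: "finite N \<Longrightarrow> good N R pref X \<Longrightarrow> finite X"
  unfolding good_def using finite_subset by blast

lemma good_shape_in:
  assumes fN: "finite N" and g: "good N R pref X" and i: "i \<in> X"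
  shows "(ow R i X = 1 \<and> ot R i X = 0) \<or> (ot R i X = 1 \<and> 1 \<le> ow R i X) \<or> (ow R i X = 1 \<and> 1 \<le> ot R i X)"
proof -
  have f: "finite X" using good_fin[OF fN g] .
  have "1 \<le> ow R i X" using ow_pos[OF f i] .
  then show ?thesis using g i unfolding good_def by auto
qed

lemma good_shape_out:
  assumes fN: "finite N" and g: "good N R pref X" and i: "i \<notin> X"
  shows "(ow R i X = 1 \<and> ot R i X = 0) \<or> (ow R i X = 0 \<and> ot R i X = 1) \<or>
         (ot R i X = 1 \<and> 1 \<le> ow R i X) \<or> (ow R i X = 1 \<and> 1 \<le> ot R i X)"
proof -
  have f: "finite X" using good_fin[OF fN g] .
  obtain j where j: "j \<in> X" using g unfolding good_def by auto
  have sj: "(ow R j X = 1 \<and> ot R j X = 0) \<or> (ot R j X = 1 \<and> 1 \<le> ow R j X) \<or> (ow R j X = 1 \<and> 1 \<le> ot R j X)"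
    using good_shape_in[OF fN g j] .
  show ?thesis
  proof (cases "sc R j i")
    case True then show ?thesis using sj ow_same[OF True] ot_same[OF True] by auto
  next
    case False then show ?thesis using sj ow_diff[OF False] ot_diff[OF False] by auto
  qed
qed

lemma exists_same:
  assumes "1 \<le> ow R i X" shows "\<exists>c\<in>X. sc R i c"
proof (rule ccontr)
  assume a: "\<not> ?thesis" have e: "{x \<in> X. sc R i x} = {}" using a by blast
  show False using assms by (simp add: ow_def e)
qed

lemma exists_other:
  assumes "1 \<le> ot R i X" shows "\<exists>c\<in>X. \<not> sc R i c"
proof (rule ccontr)
  assume a: "\<not> ?thesis" have e: "{x \<in> X. \<not> sc R i x} = {}" using a by blast
  show False using assms by (simp add: ot_def e)
qed

lemma block_TC:
  assumes G: "strict_nsp_hdg N R pref" and g: "good N R pref T" and iN: "i \<in> N" and iT: "i \<notin> T"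
    and s: "ow R i T = 1" "2 \<le> ot R i T"
    and cons: "\<forall>j\<in>T. QQ R pref j (vv R j (insert i T)) (vv R j T)"
  shows False
proof -
  have fN: "finite N" using G unfolding strict_nsp_hdg_def by auto
  have fT: "finite T" using good_fin[OF fN g] .
  have TN: "T \<subseteq> N" using g unfolding good_def by auto
  obtain c where c: "c \<in> T" "sc R i c" using exists_same[of R i T] s by auto
  have ci: "sc R c i" using c sc_sym by blast
  have cN: "c \<in> N" using c TN by auto
  interpret agent "QQ R pref c" "DD N R c" "ow R c N" "ot R c N" using agent_QQ[OF G cN] .
  define k where "k = ot R i T"
  have owc: "ow R c T = 1" "ot R c T = k" using ow_same[OF ci] ot_same[OF ci] s k_def by auto
  have appr: "strict_pref (QQ R pref c) (fr k 1) (fr (k-1) 1)" using g c owc s k_def unfolding good_def by auto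
  have owc': "ow R c (insert i T) = 2" "ot R c (insert i T) = k"
    using ow_ins[OF fT iT, of R c] ot_ins[OF fT iT, of R c] owc ci by auto
  have sub: "insert i T \<subseteq> N" using TN iN by auto
  have b1: "2 \<le> ow R c N" using ow_mono[OF fN sub, of R c] owc' by simp
  have b2: "k \<le> ot R c N" using ot_mono[OF fN sub, of R c] owc' by simp
  have zD: "fr k 2 \<in> DD N R c" by (rule inD) (use b1 b2 in auto)
  have le: "fr k 2 \<le> fr (k-1) 1" using s k_def by (subst fr_le_iff) auto
  have "strict_pref (QQ R pref c) (fr k 1) (fr k 2)" by (rule center_dom[OF _ _ b2 appr zD le]) (use b1 s k_def in auto)
  moreover have "QQ R pref c (fr k 2) (fr k 1)" using cons c owc owc' unfolding vv_def by auto
  ultimately show False using S_Q_contra by blast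
qed

lemma block_Y:
  assumes iN: "i \<in> N" and iT: "i \<notin> T" and TN: "T \<subseteq> N" and fT: "finite T" and s: "ow R i T = 1" "ot R i T = 0"
    and sh: "homogeneous N R (insert i T) \<longrightarrow> insert i T = {i}"
  shows False
proof -
  obtain c where c: "c \<in> T" "sc R i c" using exists_same[of R i T] s by auto
  have all: "\<forall>x\<in>T. sc R i x"
  proof
    fix x assume "x \<in> T"
    show "sc R i x"
    proof (rule ccontr)
      assume "\<not> sc R i x"
      have "1 \<le> ot R i T" using ot_pos[OF fT \<open>x \<in> T\<close> \<open>\<not> sc R i x\<close>] by simp
      then show False using s by simp
    qed
  qed
  have "homogeneous N R (insert i T)"
  proof (cases "i \<in> R")
    case True
    then have "insert i T \<subseteq> R" using all unfolding sc_def by auto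
    then show ?thesis unfolding homogeneous_def by simp
  next
    case False
    then have "insert i T \<subseteq> N - R" using all iN TN unfolding sc_def by auto
    then show ?thesis unfolding homogeneous_def by simp
  qed
  then have "insert i T = {i}" using sh by simp
  then show False using c iT by auto
qed


lemma block_center:
  assumes G: "strict_nsp_hdg N R pref" and g: "good N R pref C" and iC: "i \<in> C"
    and s: "ow R i C = 1" "2 \<le> ot R i C" and TN: "T \<subseteq> N" and fT: "finite T" and iT: "i \<notin> T"
    and t1: "ot R i T \<le> 1"
    and mv: "strict_pref (QQ R pref i) (vv R i (insert i T)) (vv R i C)"
  shows False
proof -
  have fN: "finite N" using G unfolding strict_nsp_hdg_def by auto
  have CN: "C \<subseteq> N" using g unfolding good_def by auto
  have iN: "i \<in> N" using iC CN by auto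
  interpret agent "QQ R pref i" "DD N R i" "ow R i N" "ot R i N" using agent_QQ[OF G iN] .
  define k where "k = ot R i C"
  have appr: "strict_pref (QQ R pref i) (fr k 1) (fr (k-1) 1)" using g iC s k_def unfolding good_def by auto
  have sub: "insert i T \<subseteq> N" using TN iN by auto
  have c1: "ow R i (insert i T) = ow R i T + 1" "ot R i (insert i T) = ot R i T"
    using ow_ins[OF fT iT, of R i] ot_ins[OF fT iT, of R i] by auto
  have b1: "ow R i T + 1 \<le> ow R i N" using ow_mono[OF fN sub, of R i] c1 by simp
  have b2: "ot R i T \<le> ot R i N" using ot_mono[OF fN sub, of R i] c1 by simp
  have b3: "k \<le> ot R i N" using ot_mono[OF fN CN, of R i] k_def by simp
  have zD: "fr (ot R i T) (ow R i T + 1) \<in> DD N R i" by (rule inD) (use b1 b2 in auto)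
  have le: "fr (ot R i T) (ow R i T + 1) \<le> fr (k-1) 1"
  proof (subst fr_le_iff)
    show "ot R i T * 1 \<le> (k - 1) * (ow R i T + 1)"
    proof -
      have "ot R i T * 1 \<le> k - 1" using t1 s k_def by auto
      also have "\<dots> \<le> (k - 1) * (ow R i T + 1)" by simp
      finally show ?thesis .
    qed
  qed (use s k_def in auto)
  have "strict_pref (QQ R pref i) (fr k 1) (fr (ot R i T) (ow R i T + 1))"
    by (rule center_dom[OF _ _ b3 appr zD le]) (use b1 s k_def in auto)
  moreover have "vv R i (insert i T) = fr (ot R i T) (ow R i T + 1)" "vv R i C = fr k 1"
    unfolding vv_def using c1 s k_def by auto
  ultimately show False using mv S_asym by auto
qed

lemma KK_ge: "int (MM N) \<le> KK N" "0 \<le> KK N" unfolding KK_def by auto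

lemma two_le_ow:
  assumes f: "finite C" and "i \<in> C" "j \<in> C" "i \<noteq> j" "sc R i j"
  shows "2 \<le> ow R i C"
proof -
  have "{i, j} \<subseteq> {x \<in> C. sc R i x}" using assms by auto
  then have "card {i, j} \<le> card {x \<in> C. sc R i x}" using f by (intro card_mono) auto
  then show ?thesis unfolding ow_def using assms by simp
qed

lemma left_sum:
  assumes G: "strict_nsp_hdg N R pref" and g: "good N R pref C" and iC: "i \<in> C"
    and sC: "(ow R i C = 1 \<and> ot R i C = 0) \<or> (ow R i C = 1 \<and> ot R i C = 1) \<or> (2 \<le> ow R i C \<and> ot R i C = 1)"
  shows "0 \<le> (\<Sum>j\<in>C-{i}. zz N R pref j (C-{i}) - zz N R pref j C)"
proof (rule sum_nonneg)
  fix j assume j: "j \<in> C - {i}"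
  have fN: "finite N" using G unfolding strict_nsp_hdg_def by auto
  have fC: "finite C" using good_fin[OF fN g] .
  have CN: "C \<subseteq> N" using g unfolding good_def by auto
  have jN: "j \<in> N" using j CN by auto
  interpret agent "QQ R pref j" "DD N R j" "ow R j N" "ot R j N" using agent_QQ[OF G jN] .
  have Kc: "int (card (DD N R j)) \<le> KK N" using cardDD[OF G jN] KK_ge[of N] by linarith
  have d1: "ow R j (C - {i}) = ow R j C - (if sc R j i then 1 else 0)" using ow_del[OF fC iC] .
  have d2: "ot R j (C - {i}) = ot R j C - (if sc R j i then 0 else 1)" using ot_del[OF fC iC] .
  show "0 \<le> zz N R pref j (C-{i}) - zz N R pref j C"
  proof (cases "sc R j i")
    case True
    have a2: "2 \<le> ow R i C" using two_le_ow[OF fC iC _ _ , of j R] j True sc_sym by auto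
    then have c1: "ot R i C = 1" using sC by auto
    have e: "ow R j C = ow R i C" "ot R j C = ot R i C" using ow_same[OF True] ot_same[OF True] by auto
    have o1: "1 \<le> ot R j N" using ot_mono[OF fN CN, of R j] e c1 by simp
    have ab: "ow R i C \<le> ow R j N" using ow_mono[OF fN CN, of R j] e by simp
    have "KK N * zc (QQ R pref j) (ow R j N) (ow R i C) 1 + zr (DD N R j) (QQ R pref j) (ow R i C) 1
        \<le> KK N * zc (QQ R pref j) (ow R j N) (ow R i C - 1) 1 + zr (DD N R j) (QQ R pref j) (ow R i C - 1) 1"
      by (rule left_leaf[OF o1 a2 ab Kc])
    then show ?thesis unfolding zz_def using d1 d2 e c1 True by simp
  next
    case False
    have e: "ow R j C = ot R i C" "ot R j C = ow R i C" using ow_diff[OF False] ot_diff[OF False] by auto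
    have c1: "1 \<le> ot R i C" using ot_pos[OF fC, of j R i] j False sc_sym by auto
    show ?thesis
    proof (cases "ow R i C = 1")
      case True
      then have "ot R i C = 1" using sC c1 by auto
      then show ?thesis unfolding zz_def using d1 d2 e True False left_pair[OF KK_ge(2)] by simp
    next
      case a2: False
      then have "2 \<le> ow R i C" "ot R i C = 1" using sC c1 by auto
      then show ?thesis unfolding zz_def using d1 d2 e False left_center[of "ow R i C" "KK N"] by simp
    qed
  qed
qed

lemma tgt_sum:
  assumes G: "strict_nsp_hdg N R pref" and g: "good N R pref T" and iN: "i \<in> N" and iT: "i \<notin> T"
    and sT: "(ow R i T = 0 \<and> ot R i T = 1) \<or> (1 \<le> ow R i T \<and> ot R i T = 1)"
    and cons: "\<forall>j\<in>T. QQ R pref j (vv R j (insert i T)) (vv R j T)"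
  shows "(if ow R i T = 0 \<and> ot R i T = 1 then - int (MM N) else 0)
           \<le> (\<Sum>j\<in>T. zz N R pref j (insert i T) - zz N R pref j T)"
proof -
  have fN: "finite N" using G unfolding strict_nsp_hdg_def by auto
  have fT: "finite T" using good_fin[OF fN g] .
  have TN: "T \<subseteq> N" using g unfolding good_def by auto
  have sub: "insert i T \<subseteq> N" using TN iN by auto
  have ins: "\<And>j. ow R j (insert i T) = ow R j T + (if sc R j i then 1 else 0)"
            "\<And>j. ot R j (insert i T) = ot R j T + (if sc R j i then 0 else 1)"
    using ow_ins[OF fT iT] ot_ins[OF fT iT] by auto
  show ?thesis
  proof (cases "ow R i T = 0 \<and> ot R i T = 1")
    case True
    have "card T = 1" using ow_ot_card[OF fT, of R i] True by simp
    then obtain x where x: "T = {x}" using card_1_singletonE by blast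
    have xN: "x \<in> N" using x TN by auto
    have nx: "\<not> sc R x i"
    proof
      assume "sc R x i"
      have xT: "x \<in> T" using x by simp
      have "1 \<le> ow R x T" by (rule ow_pos[OF fT xT])
      then have "1 \<le> ow R i T" using ow_same[OF \<open>sc R x i\<close>, of T] by simp
      then show False using True by simp
    qed
    interpret agent "QQ R pref x" "DD N R x" "ow R x N" "ot R x N" using agent_QQ[OF G xN] .
    have e: "ow R x T = 1" "ot R x T = 0" using ow_diff[OF nx] ot_diff[OF nx] True by auto
    have e2: "ow R x (insert i T) = 1" "ot R x (insert i T) = 1" using ins e nx by auto
    have o1: "1 \<le> ot R x N" using ot_mono[OF fN sub, of R x] e2 by simp
    have o2: "1 \<le> ow R x N" using ow_mono[OF fN sub, of R x] e2 by simp
    have c: "QQ R pref x (fr 1 1) (fr 0 1)" using cons x e e2 unfolding vv_def by auto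
    have "KK N * zc (QQ R pref x) (ow R x N) 1 0 + zr (DD N R x) (QQ R pref x) 1 0 - int (card (DD N R x))
        \<le> KK N * zc (QQ R pref x) (ow R x N) 1 1 + zr (DD N R x) (QQ R pref x) 1 1"
      by (rule tgt_single[OF o1 o2 c])
    moreover have "int (card (DD N R x)) \<le> int (MM N)" using cardDD[OF G xN] by simp
    ultimately show ?thesis unfolding zz_def using x e e2 True by simp
  next
    case False
    then have sb: "1 \<le> ow R i T" "ot R i T = 1" using sT by auto
    have "0 \<le> (\<Sum>j\<in>T. zz N R pref j (insert i T) - zz N R pref j T)"
    proof (rule sum_nonneg)
      fix j assume j: "j \<in> T"
      have jN: "j \<in> N" using j TN by auto
      interpret agent "QQ R pref j" "DD N R j" "ow R j N" "ot R j N" using agent_QQ[OF G jN] .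
      show "0 \<le> zz N R pref j (insert i T) - zz N R pref j T"
      proof (cases "sc R j i")
        case True
        have e: "ow R j T = ow R i T" "ot R j T = ot R i T" using ow_same[OF True] ot_same[OF True] by auto
        have e2: "ow R j (insert i T) = ow R i T + 1" "ot R j (insert i T) = 1" using ins e True sb by auto
        have o1: "1 \<le> ot R j N" using ot_mono[OF fN sub, of R j] e2 by simp
        have o2: "ow R i T + 1 \<le> ow R j N" using ow_mono[OF fN sub, of R j] e2 by simp
        have c: "QQ R pref j (fr 1 (ow R i T + 1)) (fr 1 (ow R i T))" using cons j e e2 sb unfolding vv_def by auto
        have "KK N * zc (QQ R pref j) (ow R j N) (ow R i T) 1 + zr (DD N R j) (QQ R pref j) (ow R i T) 1
            \<le> KK N * zc (QQ R pref j) (ow R j N) (ow R i T + 1) 1 + zr (DD N R j) (QQ R pref j) (ow R i T + 1) 1"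
          by (rule tgt_leaf[OF o1 sb(1) o2 c])
        then show ?thesis unfolding zz_def using e e2 sb by simp
      next
        case False
        have e: "ow R j T = ot R i T" "ot R j T = ow R i T" using ow_diff[OF False] ot_diff[OF False] by auto
        have e2: "ow R j (insert i T) = 1" "ot R j (insert i T) = ow R i T + 1" using ins e False sb by auto
        show ?thesis unfolding zz_def using e e2 sb tgt_center[OF sb(1), of "KK N"] by simp
      qed
    qed
    then show ?thesis using False by simp
  qed
qed


lemma good_del:
  assumes G: "strict_nsp_hdg N R pref" and g: "good N R pref C" and iC: "i \<in> C"
    and sC: "(ow R i C = 1 \<and> ot R i C = 1) \<or> (2 \<le> ow R i C \<and> ot R i C = 1)"
  shows "good N R pref (C - {i})"
proof -
  have fN: "finite N" using G unfolding strict_nsp_hdg_def by auto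
  have fC: "finite C" using good_fin[OF fN g] .
  have CN: "C \<subseteq> N" using g unfolding good_def by auto
  have "card C \<ge> 2" using ow_ot_card[OF fC, of R i] sC by auto
  then have ne: "C - {i} \<noteq> {}"
  proof -
    assume c2: "card C \<ge> 2"
    show ?thesis
    proof
      assume "C - {i} = {}"
      then have "C \<subseteq> {i}" by blast
      then have "card C \<le> card {i}" by (intro card_mono) auto
      then show False using c2 by simp
    qed
  qed
  have d1: "\<And>j. ow R j (C - {i}) = ow R j C - (if sc R j i then 1 else 0)" using ow_del[OF fC iC] .
  have d2: "\<And>j. ot R j (C - {i}) = ot R j C - (if sc R j i then 0 else 1)" using ot_del[OF fC iC] .
  have sh: "\<forall>j\<in>C-{i}. (ow R j (C-{i}) = 1 \<and> ot R j (C-{i}) = 0) \<or> ot R j (C-{i}) = 1 \<or> (ow R j (C-{i}) = 1 \<and> 1 \<le> ot R j (C-{i}))"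
  proof
    fix j assume j: "j \<in> C - {i}"
    show "(ow R j (C-{i}) = 1 \<and> ot R j (C-{i}) = 0) \<or> ot R j (C-{i}) = 1 \<or> (ow R j (C-{i}) = 1 \<and> 1 \<le> ot R j (C-{i}))"
    proof (cases "sc R j i")
      case True
      have e: "ow R j C = ow R i C" "ot R j C = ot R i C" using ow_same[OF True] ot_same[OF True] by auto
      then show ?thesis using d1 d2 True sC by auto
    next
      case False
      have e: "ow R j C = ot R i C" "ot R j C = ow R i C" using ow_diff[OF False] ot_diff[OF False] by auto
      then show ?thesis using d1 d2 False sC by auto
    qed
  qed
  have ce: "\<forall>j\<in>C-{i}. ow R j (C-{i}) = 1 \<and> 2 \<le> ot R j (C-{i}) \<longrightarrow>
        strict_pref (QQ R pref j) (fr (ot R j (C-{i})) 1) (fr (ot R j (C-{i}) - 1) 1)"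
  proof (intro ballI impI)
    fix j assume j: "j \<in> C - {i}" and cj: "ow R j (C-{i}) = 1 \<and> 2 \<le> ot R j (C-{i})"
    have jN: "j \<in> N" using j CN by auto
    interpret agent "QQ R pref j" "DD N R j" "ow R j N" "ot R j N" using agent_QQ[OF G jN] .
    have nsc: "\<not> sc R j i"
    proof
      assume t: "sc R j i"
      then show False using d2 cj ot_same[OF t] sC by auto
    qed
    have e: "ow R j C = ot R i C" "ot R j C = ow R i C" using ow_diff[OF nsc] ot_diff[OF nsc] by auto
    define a where "a = ow R i C"
    have a3: "3 \<le> a" and c1: "ot R i C = 1" using cj d1 d2 nsc e sC a_def by auto
    have ap: "strict_pref (QQ R pref j) (fr a 1) (fr (a-1) 1)"
      using g j e a3 c1 a_def unfolding good_def by auto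
    have o1: "1 \<le> ow R j N" using ow_mono[OF fN CN, of R j] e c1 by simp
    have o2: "a \<le> ot R j N" using ot_mono[OF fN CN, of R j] e a_def by simp
    have "strict_pref (QQ R pref j) (fr (a-1) 1) (fr (a-2) 1)" by (rule center_shrink[OF o1 a3 o2 ap])
    moreover have "ot R j (C-{i}) = a - 1" using d2 e nsc a_def by simp
    ultimately show "strict_pref (QQ R pref j) (fr (ot R j (C-{i})) 1) (fr (ot R j (C-{i}) - 1) 1)"
      by (simp add: numeral_2_eq_2)
  qed
  show ?thesis unfolding good_def using sh ce ne CN by auto
qed

lemma good_ins:
  assumes G: "strict_nsp_hdg N R pref" and iN: "i \<in> N" and iT: "i \<notin> T"
    and gT: "T = {} \<or> good N R pref T" and fT: "finite T" and TN: "T \<subseteq> N"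
    and sT: "(ow R i T = 0 \<and> ot R i T = 0) \<or> (ow R i T = 0 \<and> ot R i T = 1) \<or> (1 \<le> ow R i T \<and> ot R i T = 1)"
    and cons: "\<forall>j\<in>T. QQ R pref j (vv R j (insert i T)) (vv R j T)"
  shows "good N R pref (insert i T)"
proof -
  have fN: "finite N" using G unfolding strict_nsp_hdg_def by auto
  have sub: "insert i T \<subseteq> N" using TN iN by auto
  have ins: "\<And>j. ow R j (insert i T) = ow R j T + (if sc R j i then 1 else 0)"
            "\<And>j. ot R j (insert i T) = ot R j T + (if sc R j i then 0 else 1)"
    using ow_ins[OF fT iT] ot_ins[OF fT iT] by auto
  have sh: "\<forall>j\<in>insert i T. (ow R j (insert i T) = 1 \<and> ot R j (insert i T) = 0) \<or> ot R j (insert i T) = 1 \<or>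
        (ow R j (insert i T) = 1 \<and> 1 \<le> ot R j (insert i T))"
  proof
    fix j assume j: "j \<in> insert i T"
    show "(ow R j (insert i T) = 1 \<and> ot R j (insert i T) = 0) \<or> ot R j (insert i T) = 1 \<or>
        (ow R j (insert i T) = 1 \<and> 1 \<le> ot R j (insert i T))"
    proof (cases "sc R j i")
      case True
      have e: "ow R j T = ow R i T" "ot R j T = ot R i T" using ow_same[OF True] ot_same[OF True] by auto
      then show ?thesis using ins True sT by auto
    next
      case False
      then have jT: "j \<in> T" using j by auto
      have e: "ow R j T = ot R i T" "ot R j T = ow R i T" using ow_diff[OF False] ot_diff[OF False] by auto
      have "1 \<le> ot R i T" using ot_pos[OF fT jT, of R i] False sc_sym by auto
      then show ?thesis using ins False sT e by auto
    qed
  qed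
  have ce: "\<forall>j\<in>insert i T. ow R j (insert i T) = 1 \<and> 2 \<le> ot R j (insert i T) \<longrightarrow>
        strict_pref (QQ R pref j) (fr (ot R j (insert i T)) 1) (fr (ot R j (insert i T) - 1) 1)"
  proof (intro ballI impI)
    fix j assume j: "j \<in> insert i T" and cj: "ow R j (insert i T) = 1 \<and> 2 \<le> ot R j (insert i T)"
    have nsc: "\<not> sc R j i"
    proof
      assume t: "sc R j i"
      then show False using ins cj ot_same[OF t] sT by auto
    qed
    then have jT: "j \<in> T" using j by auto
    have jN: "j \<in> N" using jT TN by auto
    interpret agent "QQ R pref j" "DD N R j" "ow R j N" "ot R j N" using agent_QQ[OF G jN] .
    have e: "ow R j T = ot R i T" "ot R j T = ow R i T" using ow_diff[OF nsc] ot_diff[OF nsc] by auto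
    define b where "b = ow R i T"
    have b1: "1 \<le> b" and c1: "ot R i T = 1" using cj ins nsc e sT b_def by auto
    have e2: "ow R j (insert i T) = 1" "ot R j (insert i T) = b + 1" using ins e nsc c1 b_def by auto
    have c: "QQ R pref j (fr (b+1) 1) (fr b 1)" using cons jT e e2 c1 b_def unfolding vv_def by auto
    have o1: "1 \<le> ow R j N" using ow_mono[OF fN sub, of R j] e2 by simp
    have o2: "b + 1 \<le> ot R j N" using ot_mono[OF fN sub, of R j] e2 by simp
    have m1: "fr (b+1) 1 \<in> DD N R j" by (rule c_in[OF o1 o2])
    have m2: "fr b 1 \<in> DD N R j" by (rule c_in[OF o1]) (use o2 in auto)
    have ne: "fr (b+1) 1 \<noteq> fr b 1" using c_less[of b "b+1"] by auto
    have "strict_pref (QQ R pref j) (fr (b+1) 1) (fr b 1)" using S_of_Q[OF m1 m2 ne c] .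
    then show "strict_pref (QQ R pref j) (fr (ot R j (insert i T)) 1) (fr (ot R j (insert i T) - 1) 1)"
      using e2 by simp
  qed
  show ?thesis unfolding good_def using sh ce sub by auto
qed


lemma final_arith:
  fixes K M dz dr :: int
  assumes "K = 2 * M + 1" "0 \<le> M" "(dz \<ge> 1 \<and> dr \<ge> - 2 * M) \<or> (dz \<ge> 0 \<and> dr \<ge> 1)"
  shows "1 \<le> K * dz + dr"
proof -
  have K0: "0 \<le> K" using assms by simp
  from assms(3) show ?thesis
  proof
    assume a: "dz \<ge> 1 \<and> dr \<ge> - 2 * M"
    have "K * 1 \<le> K * dz" using a K0 by (intro mult_left_mono) auto
    then show ?thesis using a assms by linarith
  next
    assume a: "dz \<ge> 0 \<and> dr \<ge> 1"
    have "0 \<le> K * dz" using a K0 by simp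
    then show ?thesis using a by linarith
  qed
qed

lemma core:
  assumes G: "strict_nsp_hdg N R pref" and gC: "good N R pref C" and iC: "i \<in> C"
    and gT: "T = {} \<or> good N R pref T" and dj: "C \<inter> T = {}"
    and mv: "strict_pref (QQ R pref i) (vv R i (insert i T)) (vv R i C)"
    and cons: "\<forall>j\<in>T. QQ R pref j (vv R j (insert i T)) (vv R j T)"
    and sh: "homogeneous N R (insert i T) \<longrightarrow> insert i T = {i}"
  shows "(C - {i} = {} \<or> good N R pref (C - {i})) \<and> good N R pref (insert i T) \<and>
         HH N R pref C + HH N R pref T + 1 \<le> HH N R pref (C - {i}) + HH N R pref (insert i T)"
proof -
  have fN: "finite N" using G unfolding strict_nsp_hdg_def by auto
  have fC: "finite C" using good_fin[OF fN gC] .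
  have CN: "C \<subseteq> N" using gC unfolding good_def by auto
  have iN: "i \<in> N" using iC CN by auto
  have iT: "i \<notin> T" using iC dj by auto
  have fT: "finite T" using gT good_fin[OF fN] by auto
  have TN: "T \<subseteq> N" using gT unfolding good_def by auto
  define a where "a = ow R i C"
  define c where "c = ot R i C"
  define a' where "a' = ow R i T"
  define c' where "c' = ot R i T"
  have sC0: "(a = 1 \<and> c = 0) \<or> (c = 1 \<and> 1 \<le> a) \<or> (a = 1 \<and> 1 \<le> c)"
    using good_shape_in[OF fN gC iC] a_def c_def by auto
  have sT0: "(a' = 0 \<and> c' = 0) \<or> (a' = 1 \<and> c' = 0) \<or> (a' = 0 \<and> c' = 1) \<or> (c' = 1 \<and> 1 \<le> a') \<or> (a' = 1 \<and> 1 \<le> c')"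
  proof (cases "T = {}")
    case True then show ?thesis using a'_def c'_def by (simp add: ow_def ot_def)
  next
    case False then have "good N R pref T" using gT by simp
    then show ?thesis using good_shape_out[OF fN _ iT] a'_def c'_def by auto
  qed
  have nY: "\<not> (a' = 1 \<and> c' = 0)"
  proof
    assume "a' = 1 \<and> c' = 0"
    then show False using block_Y[OF iN iT TN fT _ _ sh] a'_def c'_def by auto
  qed
  have nTC: "\<not> (a' = 1 \<and> 2 \<le> c')"
  proof
    assume h: "a' = 1 \<and> 2 \<le> c'"
    then have "T \<noteq> {}" using a'_def by (auto simp: ow_def)
    then have "good N R pref T" using gT by simp
    then show False using block_TC[OF G _ iN iT _ _ cons] h a'_def c'_def by auto
  qed
  have sT: "(a' = 0 \<and> c' = 0) \<or> (a' = 0 \<and> c' = 1) \<or> (1 \<le> a' \<and> c' = 1)"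
    using sT0 nY nTC by auto
  have nCe: "\<not> (a = 1 \<and> 2 \<le> c)"
  proof
    assume h: "a = 1 \<and> 2 \<le> c"
    have "ot R i T \<le> 1" using sT c'_def by auto
    then show False using block_center[OF G gC iC _ _ TN fT iT _ mv] h a_def c_def by auto
  qed
  have sC: "(a = 1 \<and> c = 0) \<or> (a = 1 \<and> c = 1) \<or> (2 \<le> a \<and> c = 1)"
    using sC0 nCe by auto
  have insc: "ow R i (insert i T) = a' + 1" "ot R i (insert i T) = c'"
    using ow_ins[OF fT iT, of R i] ot_ins[OF fT iT, of R i] a'_def c'_def by auto
  have delc: "ow R i (C - {i}) = a - 1" "ot R i (C - {i}) = c"
    using ow_del[OF fC iC, of R i] ot_del[OF fC iC, of R i] a_def c_def by auto
  have mv': "strict_pref (QQ R pref i) (fr c' (a'+1)) (fr c a)"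
    using mv insc unfolding vv_def a_def c_def by simp
  interpret agent "QQ R pref i" "DD N R i" "ow R i N" "ot R i N" using agent_QQ[OF G iN] .
  have sub: "insert i T \<subseteq> N" using TN iN by auto
  have o1: "1 \<le> ot R i N"
  proof (cases "c = 0 \<and> c' = 0")
    case True
    then have "a = 1" "a' = 0" using sC sT by auto
    then show ?thesis using mv' True S_irrefl by simp
  next
    case False
    then have "c \<noteq> 0 \<or> c' \<noteq> 0" by auto
    then show ?thesis
    proof
      assume "c \<noteq> 0" then show ?thesis using ot_mono[OF fN CN, of R i] c_def by simp
    next
      assume "c' \<noteq> 0" then show ?thesis using ot_mono[OF fN sub, of R i] insc by simp
    qed
  qed
  have ba1: "a \<le> ow R i N" using ow_mono[OF fN CN, of R i] a_def by simp
  have ba2: "a' + 1 \<le> ow R i N" using ow_mono[OF fN sub, of R i] insc by simp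
  have Mb: "card (DD N R i) \<le> MM N" using cardDD[OF G iN] .
  define dz where "dz = pp (a-1) c + pp (a'+1) c' - pp a c - pp a' c'
      + zc (QQ R pref i) (ow R i N) (a'+1) c' - zc (QQ R pref i) (ow R i N) a c"
  define dr where "dr = zr (DD N R i) (QQ R pref i) (a'+1) c' - zr (DD N R i) (QQ R pref i) a c
      - (if a' = 0 \<and> c' = 1 then int (MM N) else 0)"
  have mvr: "(dz \<ge> 1 \<and> dr \<ge> - 2 * int (MM N)) \<or> (dz \<ge> 0 \<and> dr \<ge> 1)"
  proof -
    have sT4: "(a' = 0 \<and> c' = 0) \<or> (a' = 0 \<and> c' = 1) \<or> (a' = 1 \<and> c' = 1) \<or> (2 \<le> a' \<and> c' = 1)"
      using sT by auto
    show ?thesis unfolding dz_def dr_def by (rule mover[OF o1 sC sT4 ba1 ba2 mv' Mb])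
  qed
  have fin1: "1 \<le> KK N * dz + dr" by (rule final_arith[OF _ _ mvr]) (simp_all add: KK_def)
  define L where "L = (\<Sum>j\<in>C-{i}. zz N R pref j (C-{i}) - zz N R pref j C)"
  define Tg where "Tg = (\<Sum>j\<in>T. zz N R pref j (insert i T) - zz N R pref j T)"
  have L0: "0 \<le> L" unfolding L_def by (rule left_sum[OF G gC iC]) (use sC a_def c_def in auto)
  have Tg0: "(if a' = 0 \<and> c' = 1 then - int (MM N) else 0) \<le> Tg"
  proof (cases "T = {}")
    case True then show ?thesis unfolding Tg_def using sT a'_def c'_def by (auto simp: ow_def ot_def)
  next
    case False
    then have gT': "good N R pref T" using gT by simp
    have "(ow R i T = 0 \<and> ot R i T = 1) \<or> (1 \<le> ow R i T \<and> ot R i T = 1)"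
      using sT False a'_def c'_def fT by (auto simp: ow_def ot_def)
    then show ?thesis unfolding Tg_def using tgt_sum[OF G gT' iN iT _ cons] a'_def c'_def by auto
  qed
  have HC: "HH N R pref C = KK N * pp a c + zz N R pref i C + (\<Sum>j\<in>C-{i}. zz N R pref j C)"
    unfolding HH_def using pblk_rel[of R C i] a_def c_def sum.remove[OF fC iC, of "\<lambda>j. zz N R pref j C"] by simp
  have HC': "HH N R pref (C - {i}) = KK N * pp (a-1) c + (\<Sum>j\<in>C-{i}. zz N R pref j (C-{i}))"
    unfolding HH_def using pblk_rel[of R "C-{i}" i] delc by simp
  have HT: "HH N R pref T = KK N * pp a' c' + (\<Sum>j\<in>T. zz N R pref j T)"
    unfolding HH_def using pblk_rel[of R T i] a'_def c'_def by simp
  have HT': "HH N R pref (insert i T) = KK N * pp (a'+1) c' + zz N R pref i (insert i T) + (\<Sum>j\<in>T. zz N R pref j (insert i T))"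
    unfolding HH_def using pblk_rel[of R "insert i T" i] insc sum.insert[OF fT iT, of "\<lambda>j. zz N R pref j (insert i T)"] by simp
  have zi: "zz N R pref i C = KK N * zc (QQ R pref i) (ow R i N) a c + zr (DD N R i) (QQ R pref i) a c"
    unfolding zz_def a_def c_def by simp
  have zi': "zz N R pref i (insert i T) = KK N * zc (QQ R pref i) (ow R i N) (a'+1) c' + zr (DD N R i) (QQ R pref i) (a'+1) c'"
    unfolding zz_def using insc by simp
  have Ls: "L = (\<Sum>j\<in>C-{i}. zz N R pref j (C-{i})) - (\<Sum>j\<in>C-{i}. zz N R pref j C)"
    unfolding L_def by (rule sum_subtractf)
  have Ts: "Tg = (\<Sum>j\<in>T. zz N R pref j (insert i T)) - (\<Sum>j\<in>T. zz N R pref j T)"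
    unfolding Tg_def by (rule sum_subtractf)
  have eq: "HH N R pref (C - {i}) + HH N R pref (insert i T) - HH N R pref C - HH N R pref T
      = KK N * dz + (zr (DD N R i) (QQ R pref i) (a'+1) c' - zr (DD N R i) (QQ R pref i) a c) + L + Tg"
    unfolding HC HC' HT HT' zi zi' Ls Ts dz_def by (simp add: algebra_simps)
  have ineq: "HH N R pref C + HH N R pref T + 1 \<le> HH N R pref (C - {i}) + HH N R pref (insert i T)"
    using eq fin1 L0 Tg0 unfolding dr_def by (auto split: if_splits)
  have g1: "C - {i} = {} \<or> good N R pref (C - {i})"
  proof (cases "a = 1 \<and> c = 0")
    case True
    then have "card C = 1" using ow_ot_card[OF fC, of R i] a_def c_def by simp
    then have "C = {i}" using iC by (metis card_1_singletonE singletonD)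
    then show ?thesis by simp
  next
    case False
    then show ?thesis using good_del[OF G gC iC] sC a_def c_def by auto
  qed
  have g2: "good N R pref (insert i T)"
    by (rule good_ins[OF G iN iT gT fT TN _ cons]) (use sT a'_def c'_def in auto)
  show ?thesis using g1 g2 ineq by simp
qed


definition Inv :: "nat set \<Rightarrow> nat set \<Rightarrow> (nat \<Rightarrow> rat \<Rightarrow> rat \<Rightarrow> bool) \<Rightarrow> nat set set \<Rightarrow> bool" where
  "Inv N R pref P \<longleftrightarrow> is_partition N P \<and> (\<forall>X\<in>P. good N R pref X)"

lemma coal_eq:
  assumes "is_partition N P" "C \<in> P" "i \<in> C"
  shows "coal P i = C"
  unfolding coal_def
proof (rule the_equality)
  show "C \<in> P \<and> i \<in> C" using assms by simp
next
  fix D assume "D \<in> P \<and> i \<in> D"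
  then show "D = C" using assms unfolding is_partition_def by blast
qed

lemma move_eq:
  assumes "coal P i = C"
  shows "move P i T = (P - {C, T}) \<union> (if C - {i} = {} then {} else {C - {i}}) \<union> {insert i T}"
  unfolding move_def using assms by simp

lemma move_sum:
  fixes h :: "nat set \<Rightarrow> int"
  assumes fP: "finite P" and CP: "C \<in> P" and iC: "i \<in> C" and T: "T \<in> P \<or> T = {}" and iT: "i \<notin> T"
    and ep: "{} \<notin> P" and dis: "\<forall>X\<in>P. \<forall>Y\<in>P. X \<noteq> Y \<longrightarrow> X \<inter> Y = {}"
    and H0: "h {} = 0" and co: "coal P i = C"
  shows "sum h (move P i T) + h C + h T = sum h P + h (C - {i}) + h (insert i T)"
proof -
  have dis2: "\<And>Z W. Z \<in> P \<Longrightarrow> W \<in> P \<Longrightarrow> Z \<noteq> W \<Longrightarrow> Z \<inter> W = {}" using dis by blast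
  define A0 where "A0 = P - {C, T}"
  define E where "E = (if C - {i} = {} then {} else {C - {i}})"
  have mv: "move P i T = A0 \<union> E \<union> {insert i T}"
    unfolding A0_def E_def by (rule move_eq[OF co])
  have fA: "finite A0" using fP A0_def by simp
  have fE: "finite E" unfolding E_def by simp
  have d1: "A0 \<inter> E = {}"
  proof (cases "C - {i} = {}")
    case True then show ?thesis unfolding E_def by simp
  next
    case False
    have "C - {i} \<notin> A0"
    proof
      assume a: "C - {i} \<in> A0"
      then have m: "C - {i} \<in> P" unfolding A0_def by simp
      have n: "C - {i} \<noteq> C" using iC by auto
      have "(C - {i}) \<inter> C = {}" using dis2[OF m CP n] .
      then show False using False by auto
    qed
    then show ?thesis unfolding E_def using False by simp
  qed
  have d2: "insert i T \<notin> A0 \<union> E"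
  proof
    assume a: "insert i T \<in> A0 \<union> E"
    then consider "insert i T \<in> A0" | "insert i T \<in> E" by blast
    then show False
    proof cases
      case 1
      then have m: "insert i T \<in> P" and n: "insert i T \<noteq> C" unfolding A0_def by auto
      have "insert i T \<inter> C = {}" using dis2[OF m CP n] .
      then show False using iC by auto
    next
      case 2
      then have "insert i T = C - {i}" unfolding E_def by (simp split: if_splits)
      then show False by auto
    qed
  qed
  have sE: "sum h E = h (C - {i})"
  proof (cases "C - {i} = {}")
    case True
    have "E = {}" unfolding E_def using True by simp
    moreover have "h (C - {i}) = 0" by (simp only: True H0)
    ultimately show ?thesis by simp
  next
    case False then show ?thesis unfolding E_def by simp
  qed
  have s1: "sum h (A0 \<union> E \<union> {insert i T}) = sum h (A0 \<union> E) + h (insert i T)"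
    using d2 fA fE by simp
  have s2: "sum h (A0 \<union> E) = sum h A0 + sum h E"
    by (rule sum.union_disjoint[OF fA fE d1])
  have s3: "sum h P = sum h A0 + h C + h T"
  proof -
    have "sum h P = sum h (P \<inter> {C, T}) + sum h (P - {C, T})" by (rule sum.Int_Diff[OF fP])
    moreover have "sum h (P \<inter> {C, T}) = h C + h T"
    proof (cases "T = {}")
      case True
      have "P \<inter> {C, T} = {C}" using CP ep True by auto
      then show ?thesis using True H0 by simp
    next
      case False
      then have TP: "T \<in> P" using T by simp
      have ne: "C \<noteq> T" using iC iT by auto
      have "P \<inter> {C, T} = {C, T}" using CP TP by auto
      then show ?thesis using ne by simp
    qed
    ultimately show ?thesis unfolding A0_def by simp
  qed
  show ?thesis unfolding mv using s1 s2 s3 sE by simp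
qed

lemma move_partition:
  assumes p: "is_partition N P" and CP: "C \<in> P" and iC: "i \<in> C" and T: "T \<in> P \<or> T = {}" and iT: "i \<notin> T"
    and co: "coal P i = C"
  shows "is_partition N (move P i T)"
proof -
  have ep: "{} \<notin> P" and un: "\<Union>P = N" and dis: "\<forall>X\<in>P. \<forall>Y\<in>P. X \<noteq> Y \<longrightarrow> X \<inter> Y = {}"
    using p unfolding is_partition_def by auto
  define A0 where "A0 = P - {C, T}"
  define E where "E = (if C - {i} = {} then {} else {C - {i}})"
  have mv: "move P i T = A0 \<union> E \<union> {insert i T}"
    unfolding A0_def E_def by (rule move_eq[OF co])
  have CT: "T \<noteq> {} \<Longrightarrow> C \<inter> T = {}" using dis CP T iC iT by blast
  have e1: "{} \<notin> move P i T" unfolding mv A0_def E_def using ep by auto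
  have e2: "\<Union>(move P i T) = N"
  proof
    have "C \<subseteq> N" "T \<subseteq> N" "\<And>Z. Z \<in> P \<Longrightarrow> Z \<subseteq> N" using un CP T by auto
    then show "\<Union>(move P i T) \<subseteq> N" unfolding mv A0_def E_def using iC by (auto split: if_splits)
  next
    show "N \<subseteq> \<Union>(move P i T)"
    proof
      fix x assume "x \<in> N"
      then obtain X where X: "X \<in> P" "x \<in> X" using un by auto
      show "x \<in> \<Union>(move P i T)"
      proof (cases "X = C \<or> X = T")
        case True
        then have "x \<in> (C - {i}) \<or> x \<in> insert i T" using X by auto
        then show ?thesis unfolding mv E_def by auto
      next
        case False
        then have "X \<in> A0" unfolding A0_def using X by auto
        then show ?thesis unfolding mv using X by auto
      qed
    qed
  qed
  have e3: "\<forall>X\<in>move P i T. \<forall>Y\<in>move P i T. X \<noteq> Y \<longrightarrow> X \<inter> Y = {}"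
  proof (intro ballI impI)
    fix X Y assume X: "X \<in> move P i T" and Y: "Y \<in> move P i T" and ne: "X \<noteq> Y"
    have cl: "\<And>Z. Z \<in> move P i T \<Longrightarrow> (Z \<in> P \<and> Z \<noteq> C \<and> Z \<noteq> T) \<or> Z = C - {i} \<or> Z = insert i T"
      unfolding mv A0_def E_def by (auto split: if_splits)
    have dA: "\<And>Z. Z \<in> P \<Longrightarrow> Z \<noteq> C \<Longrightarrow> Z \<noteq> T \<Longrightarrow> Z \<inter> (C - {i}) = {} \<and> Z \<inter> insert i T = {}"
    proof -
      fix Z assume z: "Z \<in> P" "Z \<noteq> C" "Z \<noteq> T"
      have "Z \<inter> C = {}" using dis z CP by blast
      moreover have "Z \<inter> T = {}" using dis z T by blast
      ultimately show "Z \<inter> (C - {i}) = {} \<and> Z \<inter> insert i T = {}" using iC by blast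
    qed
    have dCT: "(C - {i}) \<inter> insert i T = {}"
    proof (cases "T = {}")
      case True then show ?thesis by auto
    next
      case False then show ?thesis using CT by auto
    qed
    have dis2: "\<And>Z W. Z \<in> P \<Longrightarrow> W \<in> P \<Longrightarrow> Z \<noteq> W \<Longrightarrow> Z \<inter> W = {}" using dis by blast
    from cl[OF X] show "X \<inter> Y = {}"
    proof (elim disjE)
      assume x: "X \<in> P \<and> X \<noteq> C \<and> X \<noteq> T"
      from cl[OF Y] show ?thesis
      proof (elim disjE)
        assume y: "Y \<in> P \<and> Y \<noteq> C \<and> Y \<noteq> T"
        then show ?thesis using x ne dis2 by blast
      next
        assume "Y = C - {i}" then show ?thesis using dA[of X] x by blast
      next
        assume "Y = insert i T" then show ?thesis using dA[of X] x by blast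
      qed
    next
      assume x: "X = C - {i}"
      from cl[OF Y] show ?thesis
      proof (elim disjE)
        assume y: "Y \<in> P \<and> Y \<noteq> C \<and> Y \<noteq> T"
        then show ?thesis using x dA[of Y] by blast
      next
        assume "Y = C - {i}" then show ?thesis using x ne by simp
      next
        assume "Y = insert i T" then show ?thesis using x dCT by simp
      qed
    next
      assume x: "X = insert i T"
      from cl[OF Y] show ?thesis
      proof (elim disjE)
        assume y: "Y \<in> P \<and> Y \<noteq> C \<and> Y \<noteq> T"
        then show ?thesis using x dA[of Y] by blast
      next
        assume "Y = C - {i}" then show ?thesis using x dCT by blast
      next
        assume "Y = insert i T" then show ?thesis using x ne by simp
      qed
    qed
  qed
  show ?thesis unfolding is_partition_def using e1 e2 e3 by blast
qed


lemma step:
  assumes G: "strict_nsp_hdg N R pref" and I: "Inv N R pref P" and st: "IS_SH_step N R pref P P'"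
  shows "Inv N R pref P' \<and> TH N R pref P + 1 \<le> TH N R pref P'"
proof -
  have fN: "finite N" using G unfolding strict_nsp_hdg_def by auto
  have p: "is_partition N P" and gP: "\<forall>X\<in>P. good N R pref X" using I unfolding Inv_def by auto
  have ep: "{} \<notin> P" and un: "\<Union>P = N" and dis: "\<forall>X\<in>P. \<forall>Y\<in>P. X \<noteq> Y \<longrightarrow> X \<inter> Y = {}"
    using p unfolding is_partition_def by auto
  have fP: "finite P"
  proof -
    have "P \<subseteq> Pow N" using un by auto
    then show ?thesis using fN by (meson finite_Pow_iff finite_subset)
  qed
  obtain i T where iN: "i \<in> N" and T: "T \<in> P \<union> {{}}" and iT: "i \<notin> T" and P': "P' = move P i T"
    and sp: "strict_pref (pref i) (ratio R (insert i T)) (ratio R (coal P i))"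
    and cn: "\<forall>j\<in>T. pref j (ratio R (insert i T)) (ratio R T)"
    and sh: "homogeneous N R (insert i T) \<longrightarrow> insert i T = {i}"
    using st unfolding IS_SH_step_def by blast
  obtain C where CP: "C \<in> P" and iC: "i \<in> C" using iN un by auto
  have co: "coal P i = C" using coal_eq[OF p CP iC] .
  have gC: "good N R pref C" using gP CP by auto
  have T': "T \<in> P \<or> T = {}" using T by auto
  have gT: "T = {} \<or> good N R pref T" using T' gP by auto
  have dj: "C \<inter> T = {}"
  proof (cases "T = {}")
    case True then show ?thesis by simp
  next
    case False
    then have "T \<in> P" using T' by simp
    moreover have "C \<noteq> T" using iC iT by auto
    ultimately show ?thesis using dis CP by blast
  qed
  have fC: "finite C" using good_fin[OF fN gC] .
  have fT: "finite T" using gT good_fin[OF fN] by auto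
  have mv: "strict_pref (QQ R pref i) (vv R i (insert i T)) (vv R i C)"
    using sp co SQ_ratio[of "insert i T" C pref i R] fT fC iC by auto
  have cons: "\<forall>j\<in>T. QQ R pref j (vv R j (insert i T)) (vv R j T)"
  proof
    fix j assume j: "j \<in> T"
    then have "T \<noteq> {}" by auto
    then show "QQ R pref j (vv R j (insert i T)) (vv R j T)"
      using cn j QQ_ratio[of "insert i T" T pref j R] fT by auto
  qed
  have cr: "(C - {i} = {} \<or> good N R pref (C - {i})) \<and> good N R pref (insert i T) \<and>
         HH N R pref C + HH N R pref T + 1 \<le> HH N R pref (C - {i}) + HH N R pref (insert i T)"
    by (rule core[OF G gC iC gT dj mv cons sh])
  have part': "is_partition N P'" unfolding P' by (rule move_partition[OF p CP iC T' iT co])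
  have goods: "\<forall>X\<in>P'. good N R pref X"
  proof
    fix X assume "X \<in> P'"
    then have "X \<in> (P - {C, T}) \<or> (X = C - {i} \<and> C - {i} \<noteq> {}) \<or> X = insert i T"
      unfolding P' move_eq[OF co] by (auto split: if_splits)
    then show "good N R pref X" using gP cr by auto
  qed
  have sm: "TH N R pref P' + HH N R pref C + HH N R pref T = TH N R pref P + HH N R pref (C - {i}) + HH N R pref (insert i T)"
    unfolding TH_def P' by (rule move_sum[where h="HH N R pref", OF fP CP iC T' iT ep dis HH_empty co])
  show ?thesis using part' goods sm cr unfolding Inv_def by auto
qed


lemma zc_bound:
  assumes "\<And>v. Aval Q m v \<le> n" "x \<le> n"
  shows "- (4 * int n) \<le> zc Q m x y \<and> zc Q m x y \<le> 4 * int n + 2"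
proof -
  have a1: "int (Aval Q m (fr 0 1)) \<le> int n" using assms(1)[of "fr 0 1"] by simp
  have a2: "int (Aval Q m (fr 1 x)) \<le> int n" using assms(1)[of "fr 1 x"] by simp
  show ?thesis unfolding zc_def using a1 a2 assms(2) by simp
qed

lemma zz_bounds:
  assumes G: "strict_nsp_hdg N R pref" and jN: "j \<in> N" and XN: "X \<subseteq> N"
  shows "- (4 * int (card N) * KK N) \<le> zz N R pref j X \<and> zz N R pref j X \<le> KK N * (4 * int (card N) + 2) + int (MM N)"
proof -
  have fN: "finite N" using G unfolding strict_nsp_hdg_def by auto
  interpret agent "QQ R pref j" "DD N R j" "ow R j N" "ot R j N" using agent_QQ[OF G jN] .
  have m: "ow R j N \<le> card N" using ow_ot_card[OF fN, of R j] by simp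
  have x: "ow R j X \<le> card N" using ow_mono[OF fN XN, of R j] m by simp
  have A: "\<And>v. Aval (QQ R pref j) (ow R j N) v \<le> card N" using A_le m le_trans by blast
  define zcv where "zcv = zc (QQ R pref j) (ow R j N) (ow R j X) (ot R j X)"
  have zcb: "- (4 * int (card N)) \<le> zcv \<and> zcv \<le> 4 * int (card N) + 2"
    unfolding zcv_def using zc_bound[OF A x] .
  have K0: "0 \<le> KK N" using KK_ge by simp
  have l: "KK N * (- (4 * int (card N))) \<le> KK N * zcv" using zcb K0 by (intro mult_left_mono) auto
  have u: "KK N * zcv \<le> KK N * (4 * int (card N) + 2)" using zcb K0 by (intro mult_left_mono) auto
  have r: "0 \<le> zr (DD N R j) (QQ R pref j) (ow R j X) (ot R j X)" "zr (DD N R j) (QQ R pref j) (ow R j X) (ot R j X) \<le> int (MM N)"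
  proof -
    have "zr (DD N R j) (QQ R pref j) (ow R j X) (ot R j X) \<le> int (card (DD N R j))" by (rule zr_le)
    moreover have "int (card (DD N R j)) \<le> int (MM N)" using cardDD[OF G jN] by simp
    ultimately show "0 \<le> zr (DD N R j) (QQ R pref j) (ow R j X) (ot R j X)" "zr (DD N R j) (QQ R pref j) (ow R j X) (ot R j X) \<le> int (MM N)"
      using zr_nonneg by auto
  qed
  show ?thesis unfolding zz_def zcv_def[symmetric] using l u r by (simp add: algebra_simps)
qed

lemma pblk_bound:
  assumes f: "finite X" and c: "card X \<le> n"
  shows "0 \<le> pblk R X \<and> pblk R X \<le> 2 * int n * int (card X)"
proof -
  define x where "x = card {y \<in> X. y \<in> R}"
  define y where "y = card {y \<in> X. y \<notin> R}"
  have s: "x + y = card X" unfolding x_def y_def by (rule card_split[OF f])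
  have p: "pblk R X = pp x y" unfolding pblk_def x_def y_def by simp
  have "pp x y \<le> 2 * int n * int (card X)"
  proof -
    have a: "int x \<le> int n" "int y \<le> int n" "int x \<le> int (card X)" "int y \<le> int (card X)" using s c by auto
    have "int x * int x \<le> int n * int (card X)" using a by (intro mult_mono) auto
    moreover have "int y * int y \<le> int n * int (card X)" using a by (intro mult_mono) auto
    moreover have "2 \<le> 2 * int n * int (card X) \<or> \<not> (x = 1 \<and> y = 1)"
    proof (cases "x = 1 \<and> y = 1")
      case True
      then have "card X = 2" using s by simp
      then have "2 * int n * int (card X) = 4 * int n" "2 \<le> n" using c by auto
      then show ?thesis by simp
    qed simp
    ultimately show ?thesis unfolding pp_def by (auto simp: power2_eq_square)
  qed
  moreover have "0 \<le> pp x y" unfolding pp_def by auto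
  ultimately show ?thesis using p by simp
qed

lemma HH_bounds:
  assumes G: "strict_nsp_hdg N R pref" and g: "good N R pref X"
  shows "- (4 * int (card N) * KK N) * int (card X) \<le> HH N R pref X \<and>
         HH N R pref X \<le> (KK N * (6 * int (card N) + 2) + int (MM N)) * int (card X)"
proof -
  have fN: "finite N" using G unfolding strict_nsp_hdg_def by auto
  have XN: "X \<subseteq> N" using g unfolding good_def by auto
  have fX: "finite X" using good_fin[OF fN g] .
  have cX: "card X \<le> card N" using card_mono[OF fN XN] .
  have pb: "0 \<le> pblk R X" "pblk R X \<le> 2 * int (card N) * int (card X)" using pblk_bound[OF fX cX] by auto
  have K0: "0 \<le> KK N" using KK_ge by simp
  have s1: "(\<Sum>j\<in>X. - (4 * int (card N) * KK N)) \<le> (\<Sum>j\<in>X. zz N R pref j X)"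
    by (rule sum_mono) (use zz_bounds[OF G _ XN] XN in auto)
  have s2: "(\<Sum>j\<in>X. zz N R pref j X) \<le> (\<Sum>j\<in>X. KK N * (4 * int (card N) + 2) + int (MM N))"
    by (rule sum_mono) (use zz_bounds[OF G _ XN] XN in auto)
  have k1: "0 \<le> KK N * pblk R X" using K0 pb by simp
  have k2: "KK N * pblk R X \<le> KK N * (2 * int (card N) * int (card X))" using K0 pb by (intro mult_left_mono) auto
  show ?thesis unfolding HH_def using s1 s2 k1 k2 by (simp add: algebra_simps)
qed

lemma TH_bounds:
  assumes G: "strict_nsp_hdg N R pref" and I: "Inv N R pref P"
  shows "- (4 * int (card N) * KK N) * int (card N) \<le> TH N R pref P \<and>
         TH N R pref P \<le> (KK N * (6 * int (card N) + 2) + int (MM N)) * int (card N)"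
proof -
  have fN: "finite N" using G unfolding strict_nsp_hdg_def by auto
  have p: "is_partition N P" and gP: "\<forall>X\<in>P. good N R pref X" using I unfolding Inv_def by auto
  have un: "\<Union>P = N" and dis: "\<forall>X\<in>P. \<forall>Y\<in>P. X \<noteq> Y \<longrightarrow> X \<inter> Y = {}"
    using p unfolding is_partition_def by auto
  have pw: "pairwise disjnt P" unfolding pairwise_def disjnt_def using dis by blast
  have fin: "\<And>A. A \<in> P \<Longrightarrow> finite A" using gP good_fin[OF fN] by blast
  have cs: "card N = (\<Sum>X\<in>P. card X)" using card_Union_disjoint[OF pw fin] un by simp
  then have cs': "int (card N) = (\<Sum>X\<in>P. int (card X))" by simp
  define lo where "lo = - (4 * int (card N) * KK N)"
  define up where "up = KK N * (6 * int (card N) + 2) + int (MM N)"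
  have "(\<Sum>X\<in>P. lo * int (card X)) \<le> TH N R pref P"
    unfolding TH_def lo_def by (rule sum_mono) (use HH_bounds[OF G] gP in auto)
  moreover have "TH N R pref P \<le> (\<Sum>X\<in>P. up * int (card X))"
    unfolding TH_def up_def by (rule sum_mono) (use HH_bounds[OF G] gP in auto)
  moreover have "(\<Sum>X\<in>P. lo * int (card X)) = lo * int (card N)" using cs' by (simp add: sum_distrib_left)
  moreover have "(\<Sum>X\<in>P. up * int (card X)) = up * int (card N)" using cs' by (simp add: sum_distrib_left)
  ultimately show ?thesis unfolding lo_def up_def by simp
qed


lemma Inv_init:
  assumes G: "strict_nsp_hdg N R pref"
  shows "Inv N R pref (singleton_partition N)"
proof -
  have p: "is_partition N (singleton_partition N)"
    unfolding is_partition_def singleton_partition_def by auto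
  have g: "\<forall>X\<in>singleton_partition N. good N R pref X"
  proof
    fix X assume "X \<in> singleton_partition N"
    then obtain i where i: "X = {i}" "i \<in> N" unfolding singleton_partition_def by auto
    have e1: "{x \<in> {i}. sc R i x} = {i}" "{x \<in> {i}. \<not> sc R i x} = {}" by auto
    have "ow R i {i} = 1" "ot R i {i} = 0" unfolding ow_def ot_def e1 by auto
    then show "good N R pref X" unfolding good_def using i by auto
  qed
  show ?thesis unfolding Inv_def using p g by simp
qed

definition Bd :: "nat \<Rightarrow> int" where
  "Bd n = ((2 * int ((n+1)^2) + 1) * (6 * int n + 2) + int ((n+1)^2)) * int n
          + 4 * int n * (2 * int ((n+1)^2) + 1) * int n"

lemma run_bound:
  assumes G: "strict_nsp_hdg N R pref" and ps0: "ps 0 = singleton_partition N"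
    and st: "\<forall>t<k. IS_SH_step N R pref (ps t) (ps (Suc t))"
  shows "int k \<le> Bd (card N)"
proof -
  have ind: "\<And>t. t \<le> k \<Longrightarrow> Inv N R pref (ps t) \<and> TH N R pref (ps 0) + int t \<le> TH N R pref (ps t)"
  proof -
    fix t show "t \<le> k \<Longrightarrow> Inv N R pref (ps t) \<and> TH N R pref (ps 0) + int t \<le> TH N R pref (ps t)"
    proof (induction t)
      case 0 then show ?case using Inv_init[OF G] ps0 by simp
    next
      case (Suc t)
      then have IH: "Inv N R pref (ps t) \<and> TH N R pref (ps 0) + int t \<le> TH N R pref (ps t)" by simp
      have "IS_SH_step N R pref (ps t) (ps (Suc t))" using st Suc.prems by simp
      then have "Inv N R pref (ps (Suc t)) \<and> TH N R pref (ps t) + 1 \<le> TH N R pref (ps (Suc t))"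
        using step[OF G] IH by blast
      then show ?case using IH by simp
    qed
  qed
  have a: "Inv N R pref (ps k)" "TH N R pref (ps 0) + int k \<le> TH N R pref (ps k)" using ind by auto
  have b: "Inv N R pref (ps 0)" using ind by auto
  have u: "TH N R pref (ps k) \<le> (KK N * (6 * int (card N) + 2) + int (MM N)) * int (card N)"
    using TH_bounds[OF G a(1)] by simp
  have l: "- (4 * int (card N) * KK N) * int (card N) \<le> TH N R pref (ps 0)"
    using TH_bounds[OF G b] by simp
  have l': "- (4 * int (card N) * KK N * int (card N)) \<le> TH N R pref (ps 0)" using l by simp
  have "int k \<le> (KK N * (6 * int (card N) + 2) + int (MM N)) * int (card N) + 4 * int (card N) * KK N * int (card N)"
    using a(2) u l' by linarith
  then show ?thesis unfolding Bd_def KK_def MM_def by (simp add: algebra_simps)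
qed

lemma Bd_poly: "real_of_int (Bd n) = 20 * real n ^ 4 + 45 * real n ^ 3 + 40 * real n ^ 2 + 7 * real n"
  unfolding Bd_def by (simp add: algebra_simps power2_eq_square power3_eq_cube power4_eq_xxxx)

lemma Bd_bigo: "(\<lambda>n. real_of_int (Bd n)) \<in> O(\<lambda>n. real n ^ 5)"
proof (rule bigoI[where c = 112])
  show "\<forall>\<^sub>F n in at_top. norm (real_of_int (Bd n)) \<le> 112 * norm (real n ^ 5)"
  proof (rule eventually_at_top_linorderI[where c = 1])
    fix n :: nat assume n: "1 \<le> n"
    then have x: "(1::real) \<le> real n" by simp
    have p4: "real n ^ 4 \<le> real n ^ 5" using power_increasing[OF _ x, of 4 5] by simp
    have p3: "real n ^ 3 \<le> real n ^ 5" using power_increasing[OF _ x, of 3 5] by simp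
    have p2: "real n ^ 2 \<le> real n ^ 5" using power_increasing[OF _ x, of 2 5] by simp
    have p1: "real n \<le> real n ^ 5" using power_increasing[OF _ x, of 1 5] by simp
    have nn: "0 \<le> 20 * real n ^ 4 + 45 * real n ^ 3 + 40 * real n ^ 2 + 7 * real n" by simp
    have e: "norm (real_of_int (Bd n)) = 20 * real n ^ 4 + 45 * real n ^ 3 + 40 * real n ^ 2 + 7 * real n"
      unfolding Bd_poly using nn by simp
    have e2: "norm (real n ^ 5) = real n ^ 5" by simp
    show "norm (real_of_int (Bd n)) \<le> 112 * norm (real n ^ 5)"
      unfolding e e2 using p1 p2 p3 p4 by linarith
  qed
qed

theorem theorem4p4:
  shows "\<exists>f :: nat \<Rightarrow> real. f \<in> O(\<lambda>n. real n ^ 5) \<and>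
    (\<forall>N R pref. strict_nsp_hdg N R pref \<longrightarrow>
      (\<forall>(k::nat) (ps :: nat \<Rightarrow> nat set set).
         ps 0 = singleton_partition N \<and> (\<forall>t<k. IS_SH_step N R pref (ps t) (ps (Suc t)))
         \<longrightarrow> real k \<le> f (card N)))"
proof (intro exI[of _ "\<lambda>n. real_of_int (Bd n)"] conjI allI impI)
  show "(\<lambda>n. real_of_int (Bd n)) \<in> O(\<lambda>n. real n ^ 5)" by (rule Bd_bigo)
next
  fix N R pref k and ps :: "nat \<Rightarrow> nat set set"
  assume G: "strict_nsp_hdg N R pref"
    and h: "ps 0 = singleton_partition N \<and> (\<forall>t<k. IS_SH_step N R pref (ps t) (ps (Suc t)))"
  have "int k \<le> Bd (card N)" using run_bound[OF G] h by blast
  then show "real k \<le> real_of_int (Bd (card N))" by linarith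
qed


end
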